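(* For any $\mu,\nu\in(\omega\setminus\{0\})\cup\{\infty\}$ there is a complete theory $T_{\mu,\nu}$ and an expansion $T'_{\mu,\nu}$ of it such that ${\rm ar}(T_{\mu,\nu})=\mu$ and ${\rm ar}(T'_{\mu,\nu})=\nu$.
   Context: An expansion of $T$ is a complete theory $T'\supseteq T$ in a language containing that of $T$. For $n\geq1$, a formula of a theory $T$ is $n$-ary if it is $T$-equivalent to a Boolean combination of $T$-formulas each with at most $n$ free variables; $T$ is unary ($1$-ary) if every formula is $T$-equivalent to a Boolean combination of formulas with one free variable and formulas $x\approx y$; for $n\geq2$, $T$ is $n$-ary if all its formulas are $n$-ary; $T$ is $0$-ary if every formula is $T$-equivalent to a sentence. ${\rm ar}(T)$ is the number $n$ such that $T$ is $n$-ary and not $(n-1)$-ary, and ${\rm ar}(T)=\infty$ if $T$ is $n$-ary for no $n$. *)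

theory Defs
  imports Main "HOL-Library.Extended_Nat"
begin

text \<open>Function and relation symbols are natural numbers; a language is a set of
  (symbol, arity) pairs for function symbols (constants have arity 0) and for
  relation symbols.\<close>

datatype trm = Var nat | Fn nat "trm list"

datatype fm = FBot | FEq trm trm | FRel nat "trm list" | FNeg fm | FConj fm fm | FEx nat fm

record lang =
  fsyms :: "(nat \<times> nat) set"
  rsyms :: "(nat \<times> nat) set"

definition sublang :: "lang \<Rightarrow> lang \<Rightarrow> bool" where
  "sublang L L' \<longleftrightarrow> fsyms L \<subseteq> fsyms L' \<and> rsyms L \<subseteq> rsyms L'"

fun tvars :: "trm \<Rightarrow> nat set" where
  "tvars (Var i) = {i}"
| "tvars (Fn f ts) = (\<Union>t\<in>set ts. tvars t)"

fun fv :: "fm \<Rightarrow> nat set" where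
  "fv FBot = {}"
| "fv (FEq s t) = tvars s \<union> tvars t"
| "fv (FRel r ts) = (\<Union>t\<in>set ts. tvars t)"
| "fv (FNeg p) = fv p"
| "fv (FConj p q) = fv p \<union> fv q"
| "fv (FEx x p) = fv p - {x}"

fun wf_trm :: "lang \<Rightarrow> trm \<Rightarrow> bool" where
  "wf_trm L (Var i) = True"
| "wf_trm L (Fn f ts) = ((f, length ts) \<in> fsyms L \<and> (\<forall>t\<in>set ts. wf_trm L t))"

fun wf_fm :: "lang \<Rightarrow> fm \<Rightarrow> bool" where
  "wf_fm L FBot = True"
| "wf_fm L (FEq s t) = (wf_trm L s \<and> wf_trm L t)"
| "wf_fm L (FRel r ts) = ((r, length ts) \<in> rsyms L \<and> (\<forall>t\<in>set ts. wf_trm L t))"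
| "wf_fm L (FNeg p) = wf_fm L p"
| "wf_fm L (FConj p q) = (wf_fm L p \<and> wf_fm L q)"
| "wf_fm L (FEx x p) = wf_fm L p"

definition sentence :: "lang \<Rightarrow> fm \<Rightarrow> bool" where
  "sentence L p \<longleftrightarrow> wf_fm L p \<and> fv p = {}"

text \<open>Structures have universes that are subsets of \<open>nat\<close>. Since all languages
  here are countable, by downward Loewenheim--Skolem this suffices for
  consistency, consequence and equivalence modulo a theory.\<close>

record struc =
  dom :: "nat set"
  fnI :: "nat \<Rightarrow> nat list \<Rightarrow> nat"
  relI :: "nat \<Rightarrow> nat list \<Rightarrow> bool"

definition is_struc :: "lang \<Rightarrow> struc \<Rightarrow> bool" where
  "is_struc L M \<longleftrightarrow> dom M \<noteq> {} \<and>
     (\<forall>(f, n)\<in>fsyms L. \<forall>xs. length xs = n \<and> set xs \<subseteq> dom M \<longrightarrow> fnI M f xs \<in> dom M)"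

fun eval :: "struc \<Rightarrow> (nat \<Rightarrow> nat) \<Rightarrow> trm \<Rightarrow> nat" where
  "eval M e (Var i) = e i"
| "eval M e (Fn f ts) = fnI M f (map (eval M e) ts)"

fun sat :: "struc \<Rightarrow> (nat \<Rightarrow> nat) \<Rightarrow> fm \<Rightarrow> bool" where
  "sat M e FBot = False"
| "sat M e (FEq s t) = (eval M e s = eval M e t)"
| "sat M e (FRel r ts) = relI M r (map (eval M e) ts)"
| "sat M e (FNeg p) = (\<not> sat M e p)"
| "sat M e (FConj p q) = (sat M e p \<and> sat M e q)"
| "sat M e (FEx x p) = (\<exists>a\<in>dom M. sat M (e(x := a)) p)"

definition is_model :: "lang \<Rightarrow> fm set \<Rightarrow> struc \<Rightarrow> bool" where
  "is_model L T M \<longleftrightarrow> is_struc L M \<and>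
     (\<forall>p\<in>T. \<forall>e. range e \<subseteq> dom M \<longrightarrow> sat M e p)"

definition entails :: "lang \<Rightarrow> fm set \<Rightarrow> fm \<Rightarrow> bool" where
  "entails L T p \<longleftrightarrow> (\<forall>M e. is_model L T M \<and> range e \<subseteq> dom M \<longrightarrow> sat M e p)"

definition complete_theory :: "lang \<Rightarrow> fm set \<Rightarrow> bool" where
  "complete_theory L T \<longleftrightarrow> (\<forall>p\<in>T. sentence L p) \<and> (\<exists>M. is_model L T M) \<and>
     (\<forall>p. sentence L p \<longrightarrow> entails L T p \<or> entails L T (FNeg p))"

definition expansion :: "lang \<Rightarrow> fm set \<Rightarrow> lang \<Rightarrow> fm set \<Rightarrow> bool" where
  "expansion L T L' T' \<longleftrightarrow> sublang L L' \<and> T \<subseteq> T' \<and> complete_theory L' T'"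

definition T_equiv :: "lang \<Rightarrow> fm set \<Rightarrow> fm \<Rightarrow> fm \<Rightarrow> bool" where
  "T_equiv L T p q \<longleftrightarrow>
     (\<forall>M e. is_model L T M \<and> range e \<subseteq> dom M \<longrightarrow> (sat M e p \<longleftrightarrow> sat M e q))"

inductive_set bool_comb :: "fm set \<Rightarrow> fm set" for S where
  base: "p \<in> S \<Longrightarrow> p \<in> bool_comb S"
| neg: "p \<in> bool_comb S \<Longrightarrow> FNeg p \<in> bool_comb S"
| conj: "p \<in> bool_comb S \<Longrightarrow> q \<in> bool_comb S \<Longrightarrow> FConj p q \<in> bool_comb S"

definition nary_fm :: "lang \<Rightarrow> fm set \<Rightarrow> nat \<Rightarrow> fm \<Rightarrow> bool" where
  "nary_fm L T n p \<longleftrightarrow>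
     (\<exists>q\<in>bool_comb {r. wf_fm L r \<and> finite (fv r) \<and> card (fv r) \<le> n}. T_equiv L T p q)"

definition nary_theory :: "lang \<Rightarrow> fm set \<Rightarrow> nat \<Rightarrow> bool" where
  "nary_theory L T n \<longleftrightarrow>
     (if n = 0 then (\<forall>p. wf_fm L p \<longrightarrow> (\<exists>q. sentence L q \<and> T_equiv L T p q))
      else if n = 1 then
        (\<forall>p. wf_fm L p \<longrightarrow>
          (\<exists>q\<in>bool_comb ({r. wf_fm L r \<and> finite (fv r) \<and> card (fv r) \<le> 1}
                           \<union> {FEq (Var i) (Var j) | i j. True}).
             T_equiv L T p q))
      else (\<forall>p. wf_fm L p \<longrightarrow> nary_fm L T n p))"

definition has_ar :: "lang \<Rightarrow> fm set \<Rightarrow> enat \<Rightarrow> bool" where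
  "has_ar L T k \<longleftrightarrow>
     (case k of
        \<infinity> \<Rightarrow> (\<forall>n. \<not> nary_theory L T n)
      | enat n \<Rightarrow> nary_theory L T n \<and> (n \<ge> 1 \<longrightarrow> \<not> nary_theory L T (n - 1)))"

end

theory Submission
  imports Defs "HOL-Combinatorics.Permutations" "HOL-Library.Nat_Bijection"
begin

fun rs :: "fm \<Rightarrow> nat set" where
  "rs FBot = {}"
| "rs (FEq s t) = {}"
| "rs (FRel r ts) = {r}"
| "rs (FNeg p) = rs p"
| "rs (FConj p q) = rs p \<union> rs q"
| "rs (FEx x p) = rs p"

lemma finite_tvars: "finite (tvars t)"
  by (induct t) auto

lemma finite_fv: "finite (fv p)"
  by (induct p) (auto simp: finite_tvars)

lemma eval_coinc: "(\<forall>v\<in>tvars t. e1 v = e2 v) \<Longrightarrow> eval M e1 t = eval M e2 t"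
proof (induct t)
  case (Var x)
  then show ?case by simp
next
  case (Fn f ts)
  then have "map (eval M e1) ts = map (eval M e2) ts" by auto
  then show ?case by (metis eval.simps(2))
qed

lemma sat_coinc: "(\<forall>v\<in>fv p. e1 v = e2 v) \<Longrightarrow> sat M e1 p = sat M e2 p"
proof (induct p arbitrary: e1 e2)
  case (FEq s t)
  then show ?case using eval_coinc[of s e1 e2 M] eval_coinc[of t e1 e2 M] by auto
next
  case (FRel r ts)
  then have "map (eval M e1) ts = map (eval M e2) ts" using eval_coinc by auto
  then show ?case by (metis sat.simps(3))
next
  case (FEx x p)
  have "sat M (e1(x := a)) p = sat M (e2(x := a)) p" for a
    using FEx by (intro FEx.hyps) auto
  then show ?case by simp
next
  case (FConj p q)
  have "sat M e1 p = sat M e2 p" using FConj by (intro FConj.hyps(1)) auto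
  moreover have "sat M e1 q = sat M e2 q" using FConj by (intro FConj.hyps(2)) auto
  ultimately show ?case by simp
qed auto

lemma wf_trm_var: "fsyms L = {} \<Longrightarrow> wf_trm L t \<Longrightarrow> \<exists>i. t = Var i"
  by (cases t) auto

lemma wf_rs: "wf_fm L p \<Longrightarrow> r \<in> rs p \<Longrightarrow> \<exists>ar. (r, ar) \<in> rsyms L"
  by (induct p) auto

lemma wf_trm_mono: "sublang L L' \<Longrightarrow> wf_trm L t \<Longrightarrow> wf_trm L' t"
  by (induct t) (auto simp: sublang_def)

lemma wf_fm_mono: "sublang L L' \<Longrightarrow> wf_fm L p \<Longrightarrow> wf_fm L' p"
  by (induct p) (auto simp: sublang_def intro: wf_trm_mono)

definition preserves :: "struc \<Rightarrow> nat set \<Rightarrow> (nat \<Rightarrow> nat) \<Rightarrow> bool" where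
  "preserves M S \<sigma> \<longleftrightarrow> (\<forall>r\<in>S. \<forall>xs. set xs \<subseteq> dom M \<longrightarrow> relI M r (map \<sigma> xs) = relI M r xs)"

lemma map_eval_var:
  assumes "fsyms L = {}" "\<forall>t\<in>set ts. wf_trm L t"
  shows "map (eval M (\<sigma> \<circ> e)) ts = map \<sigma> (map (eval M e) ts)"
proof -
  have "eval M (\<sigma> \<circ> e) t = \<sigma> (eval M e t)" if "t \<in> set ts" for t
    using wf_trm_var[OF assms(1)] assms(2) that by fastforce
  then show ?thesis by auto
qed

lemma set_map_eval_var:
  assumes "fsyms L = {}" "\<forall>t\<in>set ts. wf_trm L t" "range e \<subseteq> A"
  shows "set (map (eval M e) ts) \<subseteq> A"
proof -
  have "eval M e t \<in> A" if "t \<in> set ts" for t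
    using wf_trm_var[OF assms(1)] assms(2,3) that by fastforce
  then show ?thesis by auto
qed

lemma sat_aut:
  assumes "fsyms L = {}" "wf_fm L p" "bij_betw \<sigma> (dom M) (dom M)"
    "preserves M (rs p) \<sigma>" "range e \<subseteq> dom M"
  shows "sat M (\<sigma> \<circ> e) p = sat M e p"
  using assms(2,4,5)
proof (induct p arbitrary: e)
  case (FEq s t)
  obtain i j where ij: "s = Var i" "t = Var j"
    using FEq wf_trm_var[OF assms(1)] by (metis wf_fm.simps(2))
  have "e i \<in> dom M" "e j \<in> dom M" using FEq by auto
  then show ?case using ij assms(3) by (auto simp: bij_betw_def inj_on_def)
next
  case (FRel r ts)
  then have w: "\<forall>t\<in>set ts. wf_trm L t" by simp
  have "map (eval M (\<sigma> \<circ> e)) ts = map \<sigma> (map (eval M e) ts)"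
    using map_eval_var[OF assms(1) w] .
  moreover have "set (map (eval M e) ts) \<subseteq> dom M"
    using set_map_eval_var[OF assms(1) w FRel(3)] .
  moreover have "r \<in> rs (FRel r ts)" by simp
  ultimately show ?case using FRel(2) unfolding preserves_def by (metis sat.simps(3))
next
  case (FNeg p)
  then show ?case by simp
next
  case (FConj p q)
  then show ?case by (simp add: preserves_def)
next
  case (FEx x p)
  have ih: "sat M (\<sigma> \<circ> e(x := b)) p = sat M (e(x := b)) p" if "b \<in> dom M" for b
  proof -
    have r: "range (e(x := b)) \<subseteq> dom M" using FEx(4) that by auto
    show ?thesis by (rule FEx.hyps) (use FEx.prems r in auto)
  qed
  have eq: "(\<sigma> \<circ> e)(x := \<sigma> b) = \<sigma> \<circ> e(x := b)" for b by auto
  have surj: "\<sigma> ` dom M = dom M" using assms(3) by (simp add: bij_betw_def)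
  show ?case
  proof
    assume "sat M (\<sigma> \<circ> e) (FEx x p)"
    then obtain a where a: "a \<in> dom M" "sat M ((\<sigma> \<circ> e)(x := a)) p" by auto
    then obtain b where b: "b \<in> dom M" "a = \<sigma> b" using surj by auto
    then show "sat M e (FEx x p)" using a ih eq by auto
  next
    assume "sat M e (FEx x p)"
    then obtain b where b: "b \<in> dom M" "sat M (e(x := b)) p" by auto
    have "\<sigma> b \<in> dom M" using b surj by auto
    then show "sat M (\<sigma> \<circ> e) (FEx x p)" using b ih eq by (auto intro!: bexI[of _ "\<sigma> b"])
  qed
qed auto


definition ThL :: "lang \<Rightarrow> struc \<Rightarrow> fm set" where
  "ThL L M = {p. sentence L p \<and> (\<forall>e. range e \<subseteq> dom M \<longrightarrow> sat M e p)}"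

lemma sentence_sat: "fv p = {} \<Longrightarrow> sat M e p = sat M e' p"
  by (rule sat_coinc) auto

lemma is_struc_I: "dom M \<noteq> {} \<Longrightarrow> fsyms L = {} \<Longrightarrow> is_struc L M"
  by (simp add: is_struc_def)

lemma model_Th: "is_struc L M \<Longrightarrow> is_model L (ThL L M) M"
  by (auto simp: is_model_def ThL_def)

lemma adm_exists: "dom M \<noteq> {} \<Longrightarrow> \<exists>e. range e \<subseteq> dom M"
proof -
  assume "dom M \<noteq> {}"
  then obtain a where "a \<in> dom M" by auto
  then show ?thesis by (intro exI[of _ "\<lambda>_. a"]) auto
qed

lemma complete_Th:
  assumes "is_struc L M"
  shows "complete_theory L (ThL L M)"
  unfolding complete_theory_def
proof (intro conjI allI impI)
  show "\<forall>p\<in>ThL L M. sentence L p" by (auto simp: ThL_def)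
  show "\<exists>Ma. is_model L (ThL L M) Ma" using model_Th[OF assms] by blast
  fix p assume sp: "sentence L p"
  show "entails L (ThL L M) p \<or> entails L (ThL L M) (FNeg p)"
  proof (cases "\<forall>e. range e \<subseteq> dom M \<longrightarrow> sat M e p")
    case True
    then have "p \<in> ThL L M" using sp by (auto simp: ThL_def)
    then show ?thesis by (auto simp: entails_def is_model_def)
  next
    case False
    then obtain e0 where e0: "range e0 \<subseteq> dom M" "\<not> sat M e0 p" by auto
    have "sat M e (FNeg p)" for e
      using e0 sentence_sat[of p M e e0] sp by (auto simp: sentence_def)
    then have "FNeg p \<in> ThL L M" using sp by (auto simp: ThL_def sentence_def)
    then show ?thesis by (auto simp: entails_def is_model_def)
  qed
qed

fun close :: "nat list \<Rightarrow> fm \<Rightarrow> fm" where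
  "close [] p = p"
| "close (x # xs) p = FNeg (FEx x (FNeg (close xs p)))"

lemma fv_close: "fv (close xs p) = fv p - set xs"
  by (induct xs) auto

lemma wf_close: "wf_fm L (close xs p) = wf_fm L p"
  by (induct xs) auto

lemma sat_close_elim: "range e \<subseteq> dom N \<Longrightarrow> sat N e (close xs p) \<Longrightarrow> sat N e p"
proof (induct xs arbitrary: e)
  case Nil
  then show ?case by simp
next
  case (Cons x xs)
  have "e x \<in> dom N" using Cons by auto
  then have "sat N (e(x := e x)) (close xs p)" using Cons(3) by auto
  then show ?case using Cons by simp
qed

lemma sat_close_intro:
  "(\<forall>e. range e \<subseteq> dom N \<longrightarrow> sat N e p) \<Longrightarrow> range e \<subseteq> dom N \<Longrightarrow> sat N e (close xs p)"
proof (induct xs arbitrary: e)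
  case Nil
  then show ?case by simp
next
  case (Cons x xs)
  have "sat N (e(x := a)) (close xs p)" if "a \<in> dom N" for a
  proof -
    have "range (e(x := a)) \<subseteq> dom N" using Cons(3) that by auto
    then show ?thesis using Cons(1) Cons(2) by blast
  qed
  then show ?case by simp
qed

definition fiff :: "fm \<Rightarrow> fm \<Rightarrow> fm" where
  "fiff p q = FConj (FNeg (FConj p (FNeg q))) (FNeg (FConj q (FNeg p)))"

lemma sat_fiff: "sat M e (fiff p q) = (sat M e p = sat M e q)"
  by (auto simp: fiff_def)

lemma Tequiv_Th:
  assumes "wf_fm L p" "wf_fm L q" "\<forall>e. range e \<subseteq> dom M \<longrightarrow> sat M e p = sat M e q"
  shows "T_equiv L (ThL L M) p q"
proof -
  define xs where "xs = sorted_list_of_set (fv (fiff p q))"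
  have sx: "set xs = fv (fiff p q)" using finite_fv by (simp add: xs_def)
  define \<phi> where "\<phi> = close xs (fiff p q)"
  have "sentence L \<phi>" using assms sx
    by (auto simp: sentence_def \<phi>_def fv_close wf_close fiff_def)
  moreover have "\<forall>e. range e \<subseteq> dom M \<longrightarrow> sat M e \<phi>"
    unfolding \<phi>_def using assms(3) by (auto intro!: sat_close_intro simp: sat_fiff)
  ultimately have "\<phi> \<in> ThL L M" by (simp add: ThL_def)
  then show ?thesis unfolding T_equiv_def
    using sat_close_elim[of _ _ xs "fiff p q"] by (auto simp: is_model_def \<phi>_def sat_fiff)
qed

lemma Tequiv_Th_D:
  assumes "is_struc L M" "T_equiv L (ThL L M) p q" "range e \<subseteq> dom M"
  shows "sat M e p = sat M e q"
  using assms model_Th unfolding T_equiv_def by blast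


lemma bool_comb_wf: "q \<in> bool_comb S \<Longrightarrow> (\<forall>r\<in>S. wf_fm L r) \<Longrightarrow> wf_fm L q"
  by (induct rule: bool_comb.induct) auto

lemma bool_comb_agree:
  "q \<in> bool_comb S \<Longrightarrow> (\<forall>r\<in>S. sat M e1 r = sat M e2 r) \<Longrightarrow> sat M e1 q = sat M e2 q"
  by (induct rule: bool_comb.induct) auto

definition small :: "lang \<Rightarrow> nat \<Rightarrow> fm set" where
  "small L n = {r. wf_fm L r \<and> finite (fv r) \<and> card (fv r) \<le> n}"

definition base :: "lang \<Rightarrow> nat \<Rightarrow> fm set" where
  "base L n = (if n = 1 then small L 1 \<union> {FEq (Var i) (Var j) | i j. True} else small L n)"

lemma nary_iff:
  assumes "n \<ge> 1"
  shows "nary_theory L T n = (\<forall>p. wf_fm L p \<longrightarrow> (\<exists>q\<in>bool_comb (base L n). T_equiv L T p q))"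
  using assms by (auto simp: nary_theory_def nary_fm_def base_def small_def)

lemma base_wf: "r \<in> base L n \<Longrightarrow> wf_fm L r"
  by (auto simp: base_def small_def split: if_splits)

lemma prop_comb:
  assumes "finite F" "F \<subseteq> S" "f0 \<in> S"
  shows "\<exists>q\<in>bool_comb S. \<forall>e. sat M e q = G (\<lambda>f. f \<in> F \<and> sat M e f)"
  using assms(1,2)
proof (induct F arbitrary: G rule: finite_induct)
  case empty
  have t: "FNeg (FConj f0 (FNeg f0)) \<in> bool_comb S" "FConj f0 (FNeg f0) \<in> bool_comb S"
    using assms(3) by (auto intro: bool_comb.intros)
  show ?case
  proof (cases "G (\<lambda>f. False)")
    case True
    then show ?thesis using t(1) by (intro bexI[of _ "FNeg (FConj f0 (FNeg f0))"]) auto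
  next
    case False
    then show ?thesis using t(2) by (intro bexI[of _ "FConj f0 (FNeg f0)"]) auto
  qed
next
  case (insert f F)
  obtain q1 where q1: "q1 \<in> bool_comb S" "\<forall>e. sat M e q1 = G ((\<lambda>g. g \<in> F \<and> sat M e g)(f := True))"
    using insert(3)[of "\<lambda>h. G (h(f := True))"] insert(4) by auto
  obtain q0 where q0: "q0 \<in> bool_comb S" "\<forall>e. sat M e q0 = G ((\<lambda>g. g \<in> F \<and> sat M e g)(f := False))"
    using insert(3)[of "\<lambda>h. G (h(f := False))"] insert(4) by auto
  have fS: "f \<in> bool_comb S" using insert(4) by (auto intro: bool_comb.intros)
  define q where "q = FNeg (FConj (FNeg (FConj f q1)) (FNeg (FConj (FNeg f) q0)))"
  have qS: "q \<in> bool_comb S" unfolding q_def using q1(1) q0(1) fS by (meson bool_comb.neg bool_comb.conj)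
  have eqf: "(\<lambda>g. g \<in> insert f F \<and> sat M e g) = (\<lambda>g. g \<in> F \<and> sat M e g)(f := sat M e f)" for e
    using insert(2) by (auto simp: fun_eq_iff)
  have "sat M e q = G (\<lambda>g. g \<in> insert f F \<and> sat M e g)" for e
    unfolding eqf q_def using q1(2) q0(2) by (cases "sat M e f") auto
  then show ?case using qS by blast
qed

lemma ub_generic:
  assumes st: "is_struc L M" and n: "n \<ge> 1"
    and H: "\<And>p. wf_fm L p \<Longrightarrow> \<exists>F. finite F \<and> F \<subseteq> base L n \<and>
      (\<forall>e1 e2. range e1 \<subseteq> dom M \<longrightarrow> range e2 \<subseteq> dom M \<longrightarrow>
         (\<forall>f\<in>F. sat M e1 f = sat M e2 f) \<longrightarrow> sat M e1 p = sat M e2 p)"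
  shows "nary_theory L (ThL L M) n"
  unfolding nary_iff[OF n]
proof (intro allI impI)
  fix p assume wp: "wf_fm L p"
  obtain F where F: "finite F" "F \<subseteq> base L n"
    "\<forall>e1 e2. range e1 \<subseteq> dom M \<longrightarrow> range e2 \<subseteq> dom M \<longrightarrow>
         (\<forall>f\<in>F. sat M e1 f = sat M e2 f) \<longrightarrow> sat M e1 p = sat M e2 p"
    using H[OF wp] by blast
  have f0: "FEq (Var 0) (Var 0) \<in> base L n"
    using n by (auto simp: base_def small_def)
  define G where "G = (\<lambda>h. \<exists>e'. range e' \<subseteq> dom M \<and> (\<forall>g\<in>F. h g = sat M e' g) \<and> sat M e' p)"
  obtain q where q: "q \<in> bool_comb (base L n)" "\<forall>e. sat M e q = G (\<lambda>f. f \<in> F \<and> sat M e f)"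
    using prop_comb[OF F(1) F(2) f0, of M G] by blast
  have "sat M e p = sat M e q" if "range e \<subseteq> dom M" for e
  proof -
    have "G (\<lambda>f. f \<in> F \<and> sat M e f) = sat M e p"
    proof
      assume "G (\<lambda>f. f \<in> F \<and> sat M e f)"
      then obtain e' where e': "range e' \<subseteq> dom M" "\<forall>g\<in>F. sat M e g = sat M e' g" "sat M e' p"
        unfolding G_def by auto
      then show "sat M e p" using F(3) that by metis
    next
      assume "sat M e p"
      then show "G (\<lambda>f. f \<in> F \<and> sat M e f)" unfolding G_def using that by auto
    qed
    then show ?thesis using q(2) by simp
  qed
  moreover have "wf_fm L q" using bool_comb_wf[OF q(1)] base_wf by blast
  ultimately have "T_equiv L (ThL L M) p q"
    by (intro Tequiv_Th[OF wp]) auto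
  then show "\<exists>q\<in>bool_comb (base L n). T_equiv L (ThL L M) p q" using q(1) by blast
qed

lemma lb_generic:
  assumes st: "is_struc L M" and n: "n \<ge> 1"
    and p: "wf_fm L p" and e: "range e1 \<subseteq> dom M" "range e2 \<subseteq> dom M"
    and d: "sat M e1 p \<noteq> sat M e2 p"
    and ag: "\<forall>r\<in>base L n. sat M e1 r = sat M e2 r"
  shows "\<not> nary_theory L (ThL L M) n"
proof
  assume "nary_theory L (ThL L M) n"
  then obtain q where q: "q \<in> bool_comb (base L n)" "T_equiv L (ThL L M) p q"
    using p unfolding nary_iff[OF n] by blast
  have "sat M e1 q = sat M e2 q" using bool_comb_agree[OF q(1) ag] .
  then show False using Tequiv_Th_D[OF st q(2)] e d by metis
qed

lemma lb0:
  assumes st: "is_struc L M" and ab: "a \<in> dom M" "b \<in> dom M" "a \<noteq> b"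
  shows "\<not> nary_theory L (ThL L M) 0"
proof
  assume a0: "nary_theory L (ThL L M) 0"
  have "\<exists>q. sentence L q \<and> T_equiv L (ThL L M) (FEq (Var 0) (Var 1)) q"
    using a0 unfolding nary_theory_def by simp
  then obtain q where q: "sentence L q" "T_equiv L (ThL L M) (FEq (Var 0) (Var 1)) q"
    by blast
  define e1 where "e1 = (\<lambda>_::nat. a)"
  define e2 where "e2 = (\<lambda>v::nat. if v = 0 then a else b)"
  have r: "range e1 \<subseteq> dom M" "range e2 \<subseteq> dom M" using ab by (auto simp: e1_def e2_def)
  have "sat M e1 q = sat M e2 q" using q(1) sentence_sat by (auto simp: sentence_def)
  moreover have "sat M e1 (FEq (Var 0) (Var 1))" "\<not> sat M e2 (FEq (Var 0) (Var 1))"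
    using ab by (auto simp: e1_def e2_def)
  ultimately show False using Tequiv_Th_D[OF st q(2)] r by metis
qed


definition blk :: "nat \<Rightarrow> nat" where "blk x = fst (prod_decode x)"
definition pos :: "nat \<Rightarrow> nat" where "pos x = snd (prod_decode x)"
definition bsz :: "nat \<Rightarrow> nat" where "bsz b = b div 2"
definition ds :: "nat \<Rightarrow> nat list" where
  "ds b = map (\<lambda>i. prod_encode (b, i)) [0..<Suc (bsz b)]"
definition Dom :: "nat set" where "Dom = {x. 2 \<le> blk x \<and> pos x \<le> bsz (blk x)}"

lemma blk_enc[simp]: "blk (prod_encode (b, i)) = b" by (simp add: blk_def)
lemma pos_enc[simp]: "pos (prod_encode (b, i)) = i" by (simp add: pos_def)
lemma enc_blk_pos: "prod_encode (blk x, pos x) = x" by (simp add: blk_def pos_def)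

lemma set_ds0: "set (ds b) = (\<lambda>i. prod_encode (b, i)) ` {0..<Suc (bsz b)}"
  by (simp add: ds_def del: upt_Suc)

lemma set_ds: "set (ds b) = {x. blk x = b \<and> pos x \<le> bsz b}"
proof -
  have "x \<in> set (ds b)" if "blk x = b" "pos x \<le> bsz b" for x
  proof -
    have "x = prod_encode (b, pos x)" using that enc_blk_pos[of x] by simp
    then show ?thesis using that unfolding set_ds0 by (auto simp: image_iff)
  qed
  then show ?thesis by (auto simp: set_ds0)
qed

lemma length_ds[simp]: "length (ds b) = Suc (bsz b)" by (simp add: ds_def)
lemma nth_ds: "i \<le> bsz b \<Longrightarrow> ds b ! i = prod_encode (b, i)"
  by (simp add: ds_def del: upt_Suc)
lemma distinct_ds: "distinct (ds b)"
  by (simp add: ds_def distinct_map inj_on_def del: upt_Suc)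

lemma mem_ds: "x \<in> set (ds b) \<longleftrightarrow> blk x = b \<and> pos x \<le> bsz b"
  by (simp add: set_ds)

lemma ds_eq_pos: "x \<in> set (ds b) \<Longrightarrow> y \<in> set (ds b) \<Longrightarrow> pos x = pos y \<Longrightarrow> x = y"
  by (metis enc_blk_pos mem_ds)

lemma ds_nth_pos: "x \<in> set (ds b) \<Longrightarrow> ds b ! pos x = x"
  by (metis enc_blk_pos mem_ds nth_ds)

lemma ds_Dom: "2 \<le> b \<Longrightarrow> set (ds b) \<subseteq> Dom"
  by (auto simp: Dom_def set_ds)

lemma ds_disj: "b \<noteq> b' \<Longrightarrow> set (ds b) \<inter> set (ds b') = {}"
  by (auto simp: set_ds)

lemma Dom_ds: "x \<in> Dom \<Longrightarrow> x \<in> set (ds (blk x))"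
  by (auto simp: Dom_def set_ds)

lemma Dom_iff: "x \<in> Dom \<longleftrightarrow> 2 \<le> blk x \<and> x \<in> set (ds (blk x))"
  by (auto simp: Dom_def set_ds)

definition valid :: "nat \<Rightarrow> nat list \<Rightarrow> bool" where
  "valid b xs \<longleftrightarrow> length xs = bsz b \<and> distinct xs \<and> set xs \<subseteq> set (ds b)"

definition miss :: "nat \<Rightarrow> nat list \<Rightarrow> nat" where
  "miss b xs = (THE m. m \<in> set (ds b) \<and> m \<notin> set xs)"

definition pof :: "nat \<Rightarrow> nat list \<Rightarrow> nat \<Rightarrow> nat" where
  "pof b xs y = (if y \<in> set (ds b) then (if pos y < length xs then xs ! pos y else miss b xs) else y)"

definition RB :: "nat \<Rightarrow> nat list \<Rightarrow> bool" where
  "RB b xs \<longleftrightarrow> valid b xs \<and> evenperm (pof b xs)"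

lemma miss_ex1:
  assumes "valid b xs"
  shows "\<exists>!m. m \<in> set (ds b) \<and> m \<notin> set xs"
proof -
  have c1: "card (set (ds b)) = Suc (bsz b)" using distinct_ds distinct_card by (metis length_ds)
  have c2: "card (set xs) = bsz b" using assms distinct_card by (metis valid_def)
  have "card (set (ds b) - set xs) = 1"
    using assms c1 c2 by (simp add: valid_def card_Diff_subset)
  then obtain m where "set (ds b) - set xs = {m}" by (meson card_1_singletonE)
  then show ?thesis by (intro ex1I[of _ m]) auto
qed

lemma miss:
  assumes "valid b xs"
  shows "miss b xs \<in> set (ds b)" "miss b xs \<notin> set xs"
  using theI'[OF miss_ex1[OF assms]] by (auto simp: miss_def)

lemma miss_unique:
  assumes "valid b xs" "m \<in> set (ds b)" "m \<notin> set xs"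
  shows "miss b xs = m"
  unfolding miss_def using the1_equality[OF miss_ex1[OF assms(1)]] assms(2,3) by auto

lemma pos_le: "y \<in> set (ds b) \<Longrightarrow> pos y \<le> bsz b"
  by (simp add: mem_ds)

lemma pof_permutes:
  assumes v: "valid b xs"
  shows "pof b xs permutes set (ds b)"
proof (rule inj_imp_permutes)
  have len: "length xs = bsz b" and dx: "distinct xs" and sx: "set xs \<subseteq> set (ds b)"
    using v by (auto simp: valid_def)
  show "inj_on (pof b xs) (set (ds b))"
  proof (rule inj_onI)
    fix y1 y2 assume y: "y1 \<in> set (ds b)" "y2 \<in> set (ds b)" "pof b xs y1 = pof b xs y2"
    have p: "pos y1 \<le> bsz b" "pos y2 \<le> bsz b" using y pos_le by auto
    show "y1 = y2"
    proof (cases "pos y1 < length xs")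
      case True
      show ?thesis
      proof (cases "pos y2 < length xs")
        case True2: True
        then have "xs ! pos y1 = xs ! pos y2" using True y by (simp add: pof_def)
        then have "pos y1 = pos y2" using nth_eq_iff_index_eq[OF dx] True True2 by blast
        then show ?thesis using ds_eq_pos y by blast
      next
        case False
        then have "xs ! pos y1 = miss b xs" using True y by (simp add: pof_def)
        then show ?thesis using miss(2)[OF v] True by (metis nth_mem)
      qed
    next
      case False
      show ?thesis
      proof (cases "pos y2 < length xs")
        case True2: True
        then have "xs ! pos y2 = miss b xs" using False y by (simp add: pof_def)
        then show ?thesis using miss(2)[OF v] True2 by (metis nth_mem)
      next
        case False2: False
        then have "pos y1 = pos y2" using False p len by simp
        then show ?thesis using ds_eq_pos y by blast
      qed
    qed
  qed
  show "finite (set (ds b))" by simp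
  show "pof b xs x \<in> set (ds b)" if "x \<in> set (ds b)" for x
    using that sx miss(1)[OF v] by (auto simp: pof_def)
  show "pof b xs x = x" if "x \<notin> set (ds b)" for x
    using that by (simp add: pof_def)
qed

lemma perm_mem: "\<sigma> permutes S \<Longrightarrow> \<sigma> x \<in> S \<longleftrightarrow> x \<in> S"
  by (rule permutes_in_image)

lemma valid_map:
  assumes "\<sigma> permutes set (ds b)"
  shows "valid b (map \<sigma> xs) = valid b xs"
proof -
  have inj: "inj \<sigma>" using permutes_inj[OF assms] .
  have "set (map \<sigma> xs) \<subseteq> set (ds b) \<longleftrightarrow> set xs \<subseteq> set (ds b)"
    using perm_mem[OF assms] by auto
  moreover have "distinct (map \<sigma> xs) = distinct xs"
    using inj by (simp add: distinct_map inj_on_def)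
  ultimately show ?thesis by (simp add: valid_def)
qed

lemma pof_map:
  assumes s: "\<sigma> permutes set (ds b)" and v: "valid b xs"
  shows "pof b (map \<sigma> xs) = \<sigma> \<circ> pof b xs"
proof
  fix y
  have v2: "valid b (map \<sigma> xs)" using valid_map[OF s] v by simp
  have m: "miss b (map \<sigma> xs) = \<sigma> (miss b xs)"
  proof (rule miss_unique[OF v2])
    show "\<sigma> (miss b xs) \<in> set (ds b)" using perm_mem[OF s] miss(1)[OF v] by simp
    show "\<sigma> (miss b xs) \<notin> set (map \<sigma> xs)"
      using miss(2)[OF v] permutes_inj[OF s] by (auto simp: inj_eq)
  qed
  show "pof b (map \<sigma> xs) y = (\<sigma> \<circ> pof b xs) y"
    using m permutes_not_in[OF s, of y] by (auto simp: pof_def)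
qed

lemma RB_map:
  assumes s: "\<sigma> permutes set (ds b)" and v: "valid b xs"
  shows "RB b (map \<sigma> xs) = (evenperm \<sigma> = RB b xs)"
proof -
  have p1: "permutation \<sigma>" using s by (meson finite_set permutes_imp_permutation)
  have p2: "permutation (pof b xs)" using pof_permutes[OF v] by (meson finite_set permutes_imp_permutation)
  show ?thesis
    using evenperm_comp[OF p1 p2] pof_map[OF s v] valid_map[OF s] v by (simp add: RB_def)
qed

lemma RB_even:
  assumes s: "\<sigma> permutes set (ds b)" and e: "evenperm \<sigma>"
  shows "RB b (map \<sigma> xs) = RB b xs"
proof (cases "valid b xs")
  case True
  then show ?thesis using RB_map[OF s True] e by simp
next
  case False
  then show ?thesis using valid_map[OF s] by (simp add: RB_def)
qed

lemma RB_fix: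
  assumes "\<forall>x\<in>set (ds b). \<sigma> x = x" "\<forall>x\<in>set xs. \<sigma> x \<in> set (ds b) \<longleftrightarrow> x \<in> set (ds b)"
  shows "RB b (map \<sigma> xs) = RB b xs"
proof (cases "set xs \<subseteq> set (ds b)")
  case True
  then have "map \<sigma> xs = xs" using assms(1) by (induct xs) auto
  then show ?thesis by simp
next
  case False
  then obtain x where "x \<in> set xs" "x \<notin> set (ds b)" by auto
  then have "\<not> set (map \<sigma> xs) \<subseteq> set (ds b)" using assms(2) by auto
  then show ?thesis using False by (simp add: RB_def valid_def)
qed

lemma take_ds: "k \<le> bsz b \<Longrightarrow> map (\<lambda>v. ds b ! v) [0..<k] = take k (ds b)"
  by (rule nth_equalityI) auto

lemma RB_canon: "RB b (take (bsz b) (ds b))"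
proof -
  let ?xs = "take (bsz b) (ds b)"
  have v: "valid b ?xs" using distinct_ds by (auto simp: valid_def dest: in_set_takeD)
  have "pof b ?xs = id"
  proof
    fix y
    show "pof b ?xs y = id y"
    proof (cases "y \<in> set (ds b)")
      case True
      show ?thesis
      proof (cases "pos y < bsz b")
        case True2: True
        then show ?thesis using True ds_nth_pos[OF True] by (simp add: pof_def)
      next
        case False
        then have py: "pos y = bsz b" using pos_le[OF True] by simp
        have "y \<notin> set ?xs"
        proof
          assume "y \<in> set ?xs"
          then obtain i where i: "i < bsz b" "?xs ! i = y" by (auto simp: in_set_conv_nth)
          then have "ds b ! i = y" by simp
          then have "pos y = i" using i(1) by (metis pos_enc nth_ds less_imp_le)
          then show False using i(1) py by simp
        qed
        then have "miss b ?xs = y" using miss_unique[OF v True] by simp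
        then show ?thesis using True False by (simp add: pof_def)
      qed
    next
      case False
      then show ?thesis by (simp add: pof_def)
    qed
  qed
  then show ?thesis using v by (simp add: RB_def)
qed

definition relM :: "nat \<Rightarrow> nat list \<Rightarrow> bool" where
  "relM r xs = (if r mod 4 = 0 then RB (2 * (r div 4)) xs
     else if r mod 4 = 1 then (\<exists>x. xs = [x] \<and> x \<in> set (ds (2 * (r div 4))))
     else if r mod 4 = 2 then RB (2 * (r div 4) + 1) xs
     else xs = [r div 4])"

definition MM :: struc where "MM = \<lparr>dom = Dom, fnI = (\<lambda>_ _. 0), relI = relM\<rparr>"

lemma MM_simps[simp]: "dom MM = Dom" "relI MM = relM"
  by (simp_all add: MM_def)

lemma Dom_ne: "Dom \<noteq> {}"
proof -
  have "prod_encode (2, 0) \<in> Dom" by (simp add: Dom_def bsz_def)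
  then show ?thesis by blast
qed

lemma struc_MM: "fsyms L = {} \<Longrightarrow> is_struc L MM"
  using Dom_ne by (simp add: is_struc_def)

lemma perm_outside_mem:
  assumes "\<sigma> permutes S" "S \<inter> S' = {}"
  shows "\<sigma> x \<in> S' \<longleftrightarrow> x \<in> S'"
proof (cases "x \<in> S")
  case True
  then have "\<sigma> x \<in> S" using perm_mem[OF assms(1)] by simp
  then show ?thesis using True assms(2) by auto
next
  case False
  then show ?thesis using permutes_not_in[OF assms(1)] by simp
qed

lemma relM_block_perm:
  assumes s: "\<sigma> permutes set (ds b)" and e: "evenperm \<sigma>"
    and P: "r mod 4 = 3 \<longrightarrow> r div 4 \<notin> set (ds b)"
  shows "relM r (map \<sigma> xs) = relM r xs"
proof -
  have blockRB: "RB b' (map \<sigma> xs) = RB b' xs" for b'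
  proof (cases "b' = b")
    case True
    then show ?thesis using RB_even[OF s e] by simp
  next
    case False
    have d: "set (ds b) \<inter> set (ds b') = {}" using ds_disj False by auto
    show ?thesis
    proof (rule RB_fix)
      show "\<forall>x\<in>set (ds b'). \<sigma> x = x" using d permutes_not_in[OF s] by auto
      show "\<forall>x\<in>set xs. (\<sigma> x \<in> set (ds b')) = (x \<in> set (ds b'))"
        using perm_outside_mem[OF s d] by auto
    qed
  qed
  have memb: "\<sigma> x \<in> set (ds b') \<longleftrightarrow> x \<in> set (ds b')" for x b'
  proof (cases "b' = b")
    case True
    then show ?thesis using perm_mem[OF s] by simp
  next
    case False
    then show ?thesis using perm_outside_mem[OF s ds_disj[OF False[symmetric]]] by simp
  qed
  have single: "(map \<sigma> xs = [y]) \<longleftrightarrow> (\<exists>x. xs = [x] \<and> \<sigma> x = y)" for y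
    by (cases xs) auto
  show ?thesis
  proof (cases "r mod 4 = 3")
    case True
    then have a: "r div 4 \<notin> set (ds b)" using P by simp
    have "\<sigma> x = r div 4 \<longleftrightarrow> x = r div 4" for x
    proof (cases "x \<in> set (ds b)")
      case True
      then show ?thesis using perm_mem[OF s, of x] a by auto
    next
      case False
      then show ?thesis using permutes_not_in[OF s False] by simp
    qed
    then show ?thesis using True single by (auto simp: relM_def)
  next
    case False
    then show ?thesis using blockRB memb single by (auto simp: relM_def)
  qed
qed

lemma perm_bij_Dom:
  assumes "\<sigma> permutes S" "S \<subseteq> Dom"
  shows "bij_betw \<sigma> Dom Dom"
  using permutes_imp_bij[OF permutes_subset[OF assms]] .


lemma lb_block:
  assumes L: "fsyms L = {}" and k: "bsz b = Suc n" and n1: "n \<ge> 1" and b2: "2 \<le> b"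
    and rb: "(rb, Suc n) \<in> rsyms L" and rbdef: "relM rb = RB b"
    and noP: "\<forall>(r, ar)\<in>rsyms L. r mod 4 = 3 \<longrightarrow> r div 4 \<notin> set (ds b)"
  shows "\<not> nary_theory L (ThL L MM) n"
proof -
  define z where "z = prod_encode (Suc b, 0)"
  have zD: "z \<in> Dom" using b2 by (simp add: z_def Dom_def)
  have zn: "z \<notin> set (ds b)" by (simp add: z_def mem_ds)
  have dsD: "set (ds b) \<subseteq> Dom" using ds_Dom b2 .
  have lds: "length (ds b) = Suc (Suc n)" using k by simp
  have nth_in: "ds b ! i \<in> set (ds b)" if "i \<le> Suc n" for i
    using that lds by (simp add: nth_mem)
  have dist: "ds b ! i \<noteq> ds b ! j" if "i \<le> Suc n" "j \<le> Suc n" "i \<noteq> j" for i j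
    using that lds nth_eq_iff_index_eq[OF distinct_ds, of i b j] by auto
  define e1 where "e1 = (\<lambda>v. if v < Suc n then ds b ! v else z)"
  define \<tau> where "\<tau> = Transposition.transpose (ds b ! 0) (ds b ! 1)"
  define e2 where "e2 = \<tau> \<circ> e1"
  have \<tau>p: "\<tau> permutes set (ds b)" unfolding \<tau>_def by (rule permutes_swap_id) (auto intro: nth_in)
  have \<tau>odd: "\<not> evenperm \<tau>" unfolding \<tau>_def evenperm_swap using dist[of 0 1] by simp
  have r1: "range e1 \<subseteq> Dom" using zD dsD nth_in by (auto simp: e1_def)
  have r2: "range e2 \<subseteq> Dom"
  proof -
    have "\<tau> (e1 v) \<in> Dom" for v
    proof (cases "e1 v \<in> set (ds b)")
      case True
      then show ?thesis using perm_mem[OF \<tau>p] dsD by blast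
    next
      case False
      then show ?thesis using permutes_not_in[OF \<tau>p False] r1 by auto
    qed
    then show ?thesis by (auto simp: e2_def)
  qed
  define p where "p = FRel rb (map Var [0..<Suc n])"
  have wp: "wf_fm L p" using rb by (simp add: p_def)
  have m1: "map (eval MM e1) (map Var [0..<Suc n]) = take (Suc n) (ds b)"
  proof -
    have "map (eval MM e1) (map Var [0..<Suc n]) = map (\<lambda>v. ds b ! v) [0..<Suc n]"
      by (simp add: e1_def)
    also have "\<dots> = take (Suc n) (ds b)" using take_ds[of "Suc n" b] k by simp
    finally show ?thesis .
  qed
  have canon: "RB b (take (Suc n) (ds b))" using RB_canon[of b] k by simp
  have vc: "valid b (take (Suc n) (ds b))" using canon by (simp add: RB_def)
  have s1: "sat MM e1 p" using m1 canon rbdef by (simp add: p_def)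
  have m2: "map (eval MM e2) (map Var [0..<Suc n]) = map \<tau> (take (Suc n) (ds b))"
  proof -
    have "map (eval MM e2) (map Var [0..<Suc n]) = map \<tau> (map (eval MM e1) (map Var [0..<Suc n]))"
      by (simp add: e2_def del: upt_Suc)
    also have "\<dots> = map \<tau> (take (Suc n) (ds b))" by (simp only: m1)
    finally show ?thesis .
  qed
  have s2: "\<not> sat MM e2 p"
    using m2 RB_map[OF \<tau>p vc] canon \<tau>odd rbdef by (simp add: p_def)
  have ag: "sat MM e1 r = sat MM e2 r" if rB: "r \<in> base L n" for r
  proof (cases "\<exists>i j. r = FEq (Var i) (Var j)")
    case True
    then obtain i j where r: "r = FEq (Var i) (Var j)" by blast
    have "inj \<tau>" using permutes_inj[OF \<tau>p] .
    then show ?thesis using r by (simp add: e2_def inj_eq)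
  next
    case False
    then have rs: "wf_fm L r" "card (fv r) \<le> n" using rB by (auto simp: base_def small_def split: if_splits)
    have "\<exists>j. j < Suc n \<and> j \<notin> fv r"
    proof (rule ccontr)
      assume "\<not> (\<exists>j. j < Suc n \<and> j \<notin> fv r)"
      then have "{0..<Suc n} \<subseteq> fv r" by auto
      then have "card {0..<Suc n} \<le> card (fv r)" using finite_fv by (rule card_mono[rotated])
      then show False using rs(2) by simp
    qed
    then obtain j where j: "j < Suc n" "j \<notin> fv r" by blast
    define t where "t = Transposition.transpose (ds b ! j) (ds b ! Suc n)"
    define \<sigma> where "\<sigma> = \<tau> \<circ> t"
    have tp: "t permutes set (ds b)" unfolding t_def
      by (rule permutes_swap_id) (use j in \<open>auto intro: nth_in\<close>)
    have \<sigma>p: "\<sigma> permutes set (ds b)" unfolding \<sigma>_def by (rule permutes_compose[OF tp \<tau>p])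
    have todd: "\<not> evenperm t" unfolding t_def evenperm_swap using dist[of j "Suc n"] j by simp
    have "evenperm (\<tau> \<circ> t) = (evenperm \<tau> = evenperm t)"
      unfolding \<tau>_def t_def by (rule evenperm_comp[OF permutation_swap_id permutation_swap_id])
    then have \<sigma>e: "evenperm \<sigma>" unfolding \<sigma>_def using \<tau>odd todd by simp
    have pres: "preserves MM (rs r) \<sigma>"
      unfolding preserves_def
    proof (intro ballI allI impI)
      fix r' xs assume "r' \<in> rs r"
      then obtain ar where "(r', ar) \<in> rsyms L" using wf_rs[OF rs(1)] by blast
      then have "r' mod 4 = 3 \<longrightarrow> r' div 4 \<notin> set (ds b)" using noP by auto
      then show "relI MM r' (map \<sigma> xs) = relI MM r' xs"
        using relM_block_perm[OF \<sigma>p \<sigma>e] by simp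
    qed
    have sa: "sat MM (\<sigma> \<circ> e1) r = sat MM e1 r"
      using sat_aut[OF L rs(1) _ pres] perm_bij_Dom[OF \<sigma>p dsD] r1 by simp
    have co: "(\<sigma> \<circ> e1) v = e2 v" if "v \<in> fv r" for v
    proof (cases "v < Suc n")
      case True
      have "v \<noteq> j" using that j by auto
      then have "t (ds b ! v) = ds b ! v" unfolding t_def
        using dist[of v j] dist[of v "Suc n"] True j by (intro transpose_apply_other) auto
      then show ?thesis using True by (simp add: \<sigma>_def e2_def e1_def)
    next
      case False
      have "z \<noteq> ds b ! j" "z \<noteq> ds b ! Suc n" using zn nth_in j by auto
      then have "t z = z" unfolding t_def by (intro transpose_apply_other) auto
      then show ?thesis using False by (simp add: \<sigma>_def e2_def e1_def)
    qed
    have "sat MM (\<sigma> \<circ> e1) r = sat MM e2 r" using co by (intro sat_coinc) auto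
    then show ?thesis using sa by simp
  qed
  show ?thesis
    using lb_generic[OF struc_MM[OF L] n1 wp] r1 r2 s1 s2 ag by simp
qed


lemma ext_perm:
  fixes f :: "nat \<Rightarrow> nat" and C :: "nat \<Rightarrow> 'c"
  assumes "finite A" "inj_on f A" "\<forall>a\<in>A. C (f a) = C a"
  shows "\<exists>\<sigma>. bij \<sigma> \<and> (\<forall>x. C (\<sigma> x) = C x) \<and> (\<forall>a\<in>A. \<sigma> a = f a)"
  using assms
proof (induct A rule: finite_induct)
  case empty
  show ?case by (rule exI[of _ id]) (metis bij_id empty_iff id_apply)
next
  case (insert a A)
  then obtain \<sigma> where \<sigma>: "bij \<sigma>" "\<forall>x. C (\<sigma> x) = C x" "\<forall>a\<in>A. \<sigma> a = f a"
    by (auto simp: inj_on_insert)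
  define c where "c = \<sigma> a"
  define d where "d = f a"
  have Ccd: "C d = C c" using insert \<sigma> by (simp add: c_def d_def)
  define \<sigma>' where "\<sigma>' = Transposition.transpose d c \<circ> \<sigma>"
  have b: "bij \<sigma>'" unfolding \<sigma>'_def using \<sigma>(1) by (simp add: bij_comp)
  have Ct: "C (Transposition.transpose d c y) = C y" for y
    using Ccd by (cases "y = d"; cases "y = c") auto
  have l: "\<forall>x. C (\<sigma>' x) = C x" using Ct \<sigma>(2) by (simp add: \<sigma>'_def)
  have "\<sigma>' a = f a" by (simp add: \<sigma>'_def c_def d_def)
  moreover have "\<sigma>' a' = f a'" if "a' \<in> A" for a'
  proof -
    have ne: "a' \<noteq> a" using that insert(2) by auto
    have "f a' \<noteq> d" using insert(4) that ne insert(2) by (auto simp: d_def inj_on_def)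
    moreover have "f a' \<noteq> c" using \<sigma>(3) that ne bij_is_inj[OF \<sigma>(1)] by (auto simp: c_def inj_eq)
    ultimately show ?thesis using \<sigma>(3) that by (simp add: \<sigma>'_def)
  qed
  ultimately show ?case using b l by auto
qed

lemma ext_permutes:
  fixes f :: "nat \<Rightarrow> nat"
  assumes "finite A" "inj_on f A" "A \<subseteq> S" "f ` A \<subseteq> S"
  shows "\<exists>\<pi>. \<pi> permutes S \<and> (\<forall>a\<in>A. \<pi> a = f a)"
proof -
  define C where "C x = (if x \<in> S then None else Some x)" for x
  have "\<forall>a\<in>A. C (f a) = C a" using assms(3,4) by (auto simp: C_def)
  then obtain \<pi> where \<pi>: "bij \<pi>" "\<forall>x. C (\<pi> x) = C x" "\<forall>a\<in>A. \<pi> a = f a"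
    using ext_perm[OF assms(1,2)] by blast
  have "\<pi> x = x" if "x \<notin> S" for x
    using \<pi>(2)[rule_format, of x] that by (auto simp: C_def split: if_splits)
  then have "\<pi> permutes S" using \<pi>(1) unfolding permutes_def bij_iff by blast
  then show ?thesis using \<pi>(3) by blast
qed

lemma two_elems:
  assumes "finite X" "2 \<le> card X"
  obtains u w where "u \<in> X" "w \<in> X" "u \<noteq> w"
proof -
  obtain B where "B \<subseteq> X" "card B = 2" using obtain_subset_with_card_n[OF assms(2)] by blast
  then show ?thesis using that by (auto simp: card_2_iff)
qed

lemma even_ext:
  fixes f :: "nat \<Rightarrow> nat"
  assumes fin: "finite A" and inj: "inj_on f A" and As: "A \<subseteq> set (ds b)" and fAs: "f ` A \<subseteq> set (ds b)"
    and par: "card A < bsz b \<or> (\<forall>\<pi>. \<pi> permutes set (ds b) \<longrightarrow> (\<forall>a\<in>A. \<pi> a = f a) \<longrightarrow> evenperm \<pi>)"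
  shows "\<exists>\<pi>. \<pi> permutes set (ds b) \<and> evenperm \<pi> \<and> (\<forall>a\<in>A. \<pi> a = f a)"
proof -
  obtain \<pi>0 where \<pi>0: "\<pi>0 permutes set (ds b)" "\<forall>a\<in>A. \<pi>0 a = f a"
    using ext_permutes[OF fin inj As fAs] by blast
  show ?thesis
  proof (cases "evenperm \<pi>0")
    case True
    then show ?thesis using \<pi>0 by blast
  next
    case False
    then have cA: "card A < bsz b" using par \<pi>0 by blast
    have cs: "card (set (ds b)) = Suc (bsz b)" using distinct_card[OF distinct_ds] by simp
    have "card (f ` A) \<le> card A" using card_image_le[OF fin] .
    then have "2 \<le> card (set (ds b) - f ` A)"
      using cA cs fAs by (simp add: card_Diff_subset finite_subset[OF fAs])
    then obtain u w where uw: "u \<in> set (ds b) - f ` A" "w \<in> set (ds b) - f ` A" "u \<noteq> w"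
      using two_elems by (metis finite_Diff finite_set)
    define \<pi> where "\<pi> = Transposition.transpose u w \<circ> \<pi>0"
    have p: "\<pi> permutes set (ds b)" unfolding \<pi>_def
      using permutes_compose[OF \<pi>0(1) permutes_swap_id] uw by auto
    have pp: "permutation \<pi>0" using \<pi>0(1) by (meson finite_set permutes_imp_permutation)
    have "evenperm \<pi> = (evenperm (Transposition.transpose u w) = evenperm \<pi>0)"
      unfolding \<pi>_def by (rule evenperm_comp[OF permutation_swap_id pp])
    then have e: "evenperm \<pi>" using False uw(3) by (simp add: evenperm_swap)
    have "\<forall>a\<in>A. \<pi> a = f a"
    proof
      fix a assume "a \<in> A"
      then have "\<pi>0 a = f a" "f a \<noteq> u" "f a \<noteq> w" using \<pi>0(2) uw by auto
      then show "\<pi> a = f a" by (simp add: \<pi>_def)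
    qed
    then show ?thesis using p e by blast
  qed
qed

lemma RB_local:
  assumes mem: "\<forall>x\<in>set xs. \<sigma> x \<in> set (ds b) \<longleftrightarrow> x \<in> set (ds b)"
    and p: "\<pi> permutes set (ds b)" and e: "evenperm \<pi>" and agree: "\<forall>x\<in>set (ds b). \<sigma> x = \<pi> x"
  shows "RB b (map \<sigma> xs) = RB b xs"
proof (cases "set xs \<subseteq> set (ds b)")
  case True
  then have "map \<sigma> xs = map \<pi> xs" using agree by (induct xs) auto
  then show ?thesis using RB_even[OF p e, of xs] by metis
next
  case False
  then obtain x where "x \<in> set xs" "x \<notin> set (ds b)" by auto
  then have "\<not> set (map \<sigma> xs) \<subseteq> set (ds b)" using mem by auto
  then show ?thesis using False by (simp add: RB_def valid_def)
qed

lemma sym4[simp]: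
  "(4 * k) mod 4 = (0::nat)" "(4 * k) div 4 = (k::nat)"
  "(4 * k + 1) mod 4 = (1::nat)" "(4 * k + 1) div 4 = (k::nat)"
  "(4 * k + 2) mod 4 = (2::nat)" "(4 * k + 2) div 4 = (k::nat)"
  "(4 * k + 3) mod 4 = (3::nat)" "(4 * k + 3) div 4 = (k::nat)"
  by presburger+

lemma mod4_cases:
  fixes r :: nat
  obtains "r = 4 * (r div 4)" "r mod 4 = 0"
  | "r = 4 * (r div 4) + 1" "r mod 4 = 1"
  | "r = 4 * (r div 4) + 2" "r mod 4 = 2"
  | "r = 4 * (r div 4) + 3" "r mod 4 = 3"
proof -
  have "(r = 4 * (r div 4) \<and> r mod 4 = 0) \<or> (r = 4 * (r div 4) + 1 \<and> r mod 4 = 1) \<or>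
        (r = 4 * (r div 4) + 2 \<and> r mod 4 = 2) \<or> (r = 4 * (r div 4) + 3 \<and> r mod 4 = 3)"
    by presburger
  then show ?thesis using that by meson
qed

definition named :: "lang \<Rightarrow> nat \<Rightarrow> bool" where
  "named L b \<longleftrightarrow> (\<forall>a\<in>set (ds b). (4 * a + 3, 1) \<in> rsyms L)"

definition goodL :: "nat \<Rightarrow> lang \<Rightarrow> bool" where
  "goodL n L \<longleftrightarrow> fsyms L = {} \<and>
    (\<forall>(r, ar)\<in>rsyms L. ar = (if r mod 4 = 1 \<or> r mod 4 = 3 then 1 else r div 4)) \<and>
    (\<forall>(r, ar)\<in>rsyms L. r mod 4 \<noteq> 3 \<longrightarrow> 1 \<le> r div 4) \<and>
    (\<forall>(r, ar)\<in>rsyms L. r mod 4 = 3 \<longrightarrow> r div 4 \<in> Dom) \<and>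
    (\<forall>b. named L b \<or> (\<forall>a\<in>set (ds b). (4 * a + 3, 1) \<notin> rsyms L)) \<and>
    (\<forall>k. (4 * k, k) \<in> rsyms L \<longrightarrow> named L (2 * k) \<or> ((4 * k + 1, 1) \<in> rsyms L \<and> k \<le> n)) \<and>
    (\<forall>k. (4 * k + 2, k) \<in> rsyms L \<longrightarrow> named L (2 * k + 1))"

lemma base_I: "n \<ge> 1 \<Longrightarrow> wf_fm L r \<Longrightarrow> card (fv r) \<le> n \<Longrightarrow> r \<in> base L n"
  using finite_fv by (auto simp: base_def small_def)

lemma base_eq: "n \<ge> 1 \<Longrightarrow> FEq (Var u) (Var v) \<in> base L n"
proof (cases "n = 1")
  case True
  then show ?thesis by (auto simp: base_def)
next
  case False
  assume "n \<ge> 1"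
  then have "card (fv (FEq (Var u) (Var v))) \<le> n" using False by (auto simp: card_insert_if)
  then show ?thesis using \<open>n \<ge> 1\<close> by (intro base_I) auto
qed


lemma goodD:
  assumes "goodL n L"
  shows "fsyms L = {}"
    and "(r, ar) \<in> rsyms L \<Longrightarrow> ar = (if r mod 4 = 1 \<or> r mod 4 = 3 then 1 else r div 4)"
    and "(r, ar) \<in> rsyms L \<Longrightarrow> r mod 4 \<noteq> 3 \<Longrightarrow> 1 \<le> r div 4"
    and "(r, ar) \<in> rsyms L \<Longrightarrow> r mod 4 = 3 \<Longrightarrow> r div 4 \<in> Dom"
    and "named L b \<or> (\<forall>a\<in>set (ds b). (4 * a + 3, 1) \<notin> rsyms L)"
    and "(4 * k, k) \<in> rsyms L \<Longrightarrow> named L (2 * k) \<or> ((4 * k + 1, 1) \<in> rsyms L \<and> k \<le> n)"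
    and "(4 * k + 2, k) \<in> rsyms L \<Longrightarrow> named L (2 * k + 1)"
  using assms unfolding goodL_def by fastforce+

lemma sym4S[simp]:
  "Suc (4 * k) mod 4 = (1::nat)" "Suc (4 * k) div 4 = (k::nat)"
  "Suc (Suc (4 * k)) mod 4 = (2::nat)" "Suc (Suc (4 * k)) div 4 = (k::nat)"
  "Suc (Suc (Suc (4 * k))) mod 4 = (3::nat)" "Suc (Suc (Suc (4 * k))) div 4 = (k::nat)"
  by presburger+

lemma finite_rs: "finite (rs p)"
  by (induct p) auto

lemma map_var_eval: "map (eval M e) (map Var vs) = map e vs"
  by (induct vs) auto

lemma fv_map_var: "fv (FRel r (map Var vs)) = set vs"
  by (induct vs) auto

lemma sat_rel_var: "sat M e (FRel r (map Var vs)) = relI M r (map e vs)"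
  using map_var_eval[of M e vs] by (metis sat.simps(3))

lemma relM_RD: "relM (4 * k) = RB (2 * k)"
  by (rule ext) (simp add: relM_def)

lemma single_map: "(map \<sigma> xs = [y]) \<longleftrightarrow> (\<exists>x. xs = [x] \<and> \<sigma> x = y)"
  by (cases xs) auto

lemma ub_main:
  assumes g: "goodL n L" and n: "n \<ge> 1"
  shows "nary_theory L (ThL L MM) n"
proof (rule ub_generic[OF struc_MM[OF goodD(1)[OF g]] n])
  fix p assume wp: "wf_fm L p"
  define S where "S = rs p"
  define V where "V = fv p"
  define blkOf :: "nat \<Rightarrow> nat" where
    "blkOf r = (if r mod 4 = 0 \<or> r mod 4 = 1 then 2 * (r div 4)
                else if r mod 4 = 2 then 2 * (r div 4) + 1 else blk (r div 4))" for r
  define Bs where "Bs = blkOf ` S"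
  define BN where "BN = {b \<in> Bs. named L b}"
  define BQ where "BQ = Bs - BN"
  define BR where "BR = {b \<in> BQ. (4 * (b div 2), b div 2) \<in> rsyms L}"
  have finS: "finite S" by (simp add: S_def finite_rs)
  have finV: "finite V" by (simp add: V_def finite_fv)
  have finBs: "finite Bs" using finS by (simp add: Bs_def)
  have finBQ: "finite BQ" using finBs by (simp add: BQ_def)
  have finBN: "finite BN" using finBs by (simp add: BN_def)
  have finBR: "finite BR" using finBQ by (simp add: BR_def)
  have SL: "\<exists>ar. (r, ar) \<in> rsyms L" if "r \<in> S" for r using wf_rs[OF wp] that by (simp add: S_def)
  have Bs2: "2 \<le> b" if bB: "b \<in> Bs" for b
  proof -
    obtain r where r0: "r \<in> S" "b = blkOf r" using bB by (auto simp: Bs_def)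
    obtain ar where "(r, ar) \<in> rsyms L" using SL r0(1) by blast
    then have r: "r \<in> S" "b = blkOf r" "(r, ar) \<in> rsyms L" using r0 by auto
    show "2 \<le> b"
    proof (cases "r mod 4 = 3")
      case True
      then have "r div 4 \<in> Dom" using goodD(4)[OF g r(3)] by simp
      then show ?thesis using r(2) True by (simp add: blkOf_def Dom_def)
    next
      case False
      then have "1 \<le> r div 4" using goodD(3)[OF g r(3)] by simp
      then show ?thesis using r(2) False by (auto simp: blkOf_def)
    qed
  qed
  have BQprop: "b = 2 * (b div 2) \<and> (4 * (b div 2) + 1, 1) \<in> rsyms L \<and>
      (\<forall>a\<in>set (ds b). (4 * a + 3, 1) \<notin> rsyms L) \<and>
      ((4 * (b div 2), b div 2) \<in> rsyms L \<longrightarrow> b div 2 \<le> n)" if bq: "b \<in> BQ" for b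
  proof -
    have nn: "\<not> named L b" and bB: "b \<in> Bs" using bq by (auto simp: BQ_def BN_def)
    obtain r where r0: "r \<in> S" "b = blkOf r" using bB by (auto simp: Bs_def)
    obtain ar where "(r, ar) \<in> rsyms L" using SL r0(1) by blast
    then have r: "r \<in> S" "b = blkOf r" "(r, ar) \<in> rsyms L" using r0 by auto
    have unn: "\<forall>a\<in>set (ds b). (4 * a + 3, 1) \<notin> rsyms L" using goodD(5)[OF g, of b] nn by auto
    have ar: "ar = (if r mod 4 = 1 \<or> r mod 4 = 3 then 1 else r div 4)" using goodD(2)[OF g r(3)] .
    show ?thesis
    proof (cases rule: mod4_cases[of r])
      case 1
      then have b: "b = 2 * (r div 4)" using r(2) by (simp add: blkOf_def)
      have "(4 * (r div 4), r div 4) \<in> rsyms L" using r(3) ar 1 by simp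
      then have "(4 * (r div 4) + 1, 1) \<in> rsyms L \<and> r div 4 \<le> n" using goodD(6)[OF g] nn b by blast
      then show ?thesis using b unn by simp
    next
      case 2
      then have b: "b = 2 * (r div 4)" using r(2) by (simp add: blkOf_def)
      have "(4 * (r div 4) + 1, 1) \<in> rsyms L" using r(3) ar 2 by simp
      moreover have "(4 * (r div 4), r div 4) \<in> rsyms L \<longrightarrow> r div 4 \<le> n"
        using goodD(6)[OF g] nn b by blast
      ultimately show ?thesis using b unn by simp
    next
      case 3
      then have b: "b = 2 * (r div 4) + 1" using r(2) by (simp add: blkOf_def)
      have "(4 * (r div 4) + 2, r div 4) \<in> rsyms L" using r(3) ar 3 by simp
      then have "named L b" using goodD(7)[OF g] b by blast
      then show ?thesis using nn by simp
    next
      case 4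
      then have b: "b = blk (r div 4)" using r(2) by (simp add: blkOf_def)
      have a: "r div 4 \<in> Dom" using goodD(4)[OF g r(3)] 4 by simp
      have "(4 * (r div 4) + 3, 1) \<in> rsyms L" using r(3) ar 4 by simp
      moreover have "r div 4 \<in> set (ds b)" using Dom_ds[OF a] b by simp
      ultimately show ?thesis using unn by blast
    qed
  qed
  define EqF where "EqF = (\<lambda>(u, v). FEq (Var u) (Var v)) ` (V \<times> V)"
  define PF where "PF = (\<lambda>(a, v). FRel (4 * a + 3) [Var v]) ` ((\<Union>b\<in>BN. set (ds b)) \<times> V)"
  define QF where "QF = (\<lambda>(b, v). FRel (4 * (b div 2) + 1) [Var v]) ` (BQ \<times> V)"
  define RF where "RF = (\<lambda>(b, vs). FRel (4 * (b div 2)) (map Var vs)) `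
      (SIGMA b:BR. {vs. set vs \<subseteq> V \<and> length vs = b div 2})"
  define F where "F = EqF \<union> PF \<union> QF \<union> RF"
  have finF: "finite F"
  proof -
    have "finite (SIGMA b:BR. {vs. set vs \<subseteq> V \<and> length vs = b div 2})"
      using finBR finite_lists_length_eq[OF finV] by (intro finite_SigmaI) auto
    then show ?thesis using finV finBN finBQ
      by (simp add: F_def EqF_def PF_def QF_def RF_def)
  qed
  have FB: "F \<subseteq> base L n"
  proof -
    have "EqF \<subseteq> base L n" using base_eq[OF n] by (auto simp: EqF_def)
    moreover have "PF \<subseteq> base L n"
    proof
      fix \<phi> assume "\<phi> \<in> PF"
      then obtain a v b where "\<phi> = FRel (4 * a + 3) [Var v]" "b \<in> BN" "a \<in> set (ds b)"
        by (auto simp: PF_def)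
      then show "\<phi> \<in> base L n" using n by (intro base_I) (auto simp: BN_def named_def)
    qed
    moreover have "QF \<subseteq> base L n"
    proof
      fix \<phi> assume "\<phi> \<in> QF"
      then obtain b v where "\<phi> = FRel (4 * (b div 2) + 1) [Var v]" "b \<in> BQ"
        by (auto simp: QF_def)
      then show "\<phi> \<in> base L n" using n BQprop by (intro base_I) auto
    qed
    moreover have "RF \<subseteq> base L n"
    proof
      fix \<phi> assume "\<phi> \<in> RF"
      then obtain b vs where \<phi>: "\<phi> = FRel (4 * (b div 2)) (map Var vs)" "b \<in> BR" "length vs = b div 2"
        by (auto simp: RF_def)
      have "card (set vs) \<le> b div 2" using \<phi>(3) card_length by metis
      moreover have "b div 2 \<le> n" using \<phi>(2) BQprop by (auto simp: BR_def)
      ultimately have "card (fv \<phi>) \<le> n" using \<phi>(1) fv_map_var by simp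
      moreover have "wf_fm L \<phi>" using \<phi> by (auto simp: BR_def)
      ultimately show "\<phi> \<in> base L n" using n by (intro base_I) auto
    qed
    ultimately show ?thesis by (auto simp: F_def)
  qed
  show "\<exists>F. finite F \<and> F \<subseteq> base L n \<and>
      (\<forall>e1 e2. range e1 \<subseteq> dom MM \<longrightarrow> range e2 \<subseteq> dom MM \<longrightarrow>
         (\<forall>f\<in>F. sat MM e1 f = sat MM e2 f) \<longrightarrow> sat MM e1 p = sat MM e2 p)"
  proof (intro exI conjI allI impI)
    show "finite F" by (rule finF)
    show "F \<subseteq> base L n" by (rule FB)
    fix e1 e2
    assume r1: "range e1 \<subseteq> dom MM" and r2: "range e2 \<subseteq> dom MM"
      and ag: "\<forall>f\<in>F. sat MM e1 f = sat MM e2 f"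
    have D1: "e1 v \<in> Dom" "e2 v \<in> Dom" for v using r1 r2 by auto
    have eqp: "(e1 u = e1 v) = (e2 u = e2 v)" if "u \<in> V" "v \<in> V" for u v
    proof -
      have "FEq (Var u) (Var v) \<in> F" using that by (auto simp: F_def EqF_def)
      then show ?thesis using ag by auto
    qed
    have PN1: "e2 v = e1 v" if v: "v \<in> V" "blk (e1 v) \<in> BN" for v
    proof -
      let ?a = "e1 v"
      have "?a \<in> set (ds (blk ?a))" using Dom_ds D1 by blast
      then have "FRel (4 * ?a + 3) [Var v] \<in> F" using v by (auto simp: F_def PF_def)
      then have "sat MM e1 (FRel (4 * ?a + 3) [Var v]) = sat MM e2 (FRel (4 * ?a + 3) [Var v])"
        using ag by blast
      then show ?thesis by (simp add: relM_def)
    qed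
    have PN2: "e1 v = e2 v" if v: "v \<in> V" "blk (e2 v) \<in> BN" for v
    proof -
      let ?a = "e2 v"
      have "?a \<in> set (ds (blk ?a))" using Dom_ds D1 by blast
      then have "FRel (4 * ?a + 3) [Var v] \<in> F" using v by (auto simp: F_def PF_def)
      then have "sat MM e1 (FRel (4 * ?a + 3) [Var v]) = sat MM e2 (FRel (4 * ?a + 3) [Var v])"
        using ag by blast
      then show ?thesis by (simp add: relM_def)
    qed
    have QQ: "(e1 v \<in> set (ds b)) = (e2 v \<in> set (ds b))" if v: "v \<in> V" "b \<in> BQ" for v b
    proof -
      have "FRel (4 * (b div 2) + 1) [Var v] \<in> F" using v by (auto simp: F_def QF_def)
      then have "sat MM e1 (FRel (4 * (b div 2) + 1) [Var v]) = sat MM e2 (FRel (4 * (b div 2) + 1) [Var v])"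
        using ag by blast
      moreover have "2 * (b div 2) = b" using BQprop[OF v(2)] by simp
      ultimately show ?thesis by (simp add: relM_def)
    qed
    have Q1: "blk (e2 v) = blk (e1 v)" if v: "v \<in> V" "blk (e1 v) \<in> BQ" for v
      using QQ[OF v] Dom_ds[OF D1(1)[of v]] by (simp add: mem_ds)
    have Q2: "blk (e1 v) = blk (e2 v)" if v: "v \<in> V" "blk (e2 v) \<in> BQ" for v
      using QQ[OF v] Dom_ds[OF D1(2)[of v]] by (simp add: mem_ds)
    define C where "C x = (if x \<in> Dom \<and> blk x \<in> BN then (0::nat, x)
        else if x \<in> Dom \<and> blk x \<in> BQ then (1, blk x) else if x \<in> Dom then (2, 0) else (3, x))" for x
    have C0: "y = z \<and> y \<in> Dom \<and> blk y \<in> BN" if "C y = (0, z)" for y z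
      using that by (auto simp: C_def split: if_splits)
    have C1: "y \<in> Dom \<and> blk y = b \<and> b \<in> BQ" if "C y = (1, b)" for y b
      using that by (auto simp: C_def split: if_splits)
    have C3: "fst (C x) = 3 \<longleftrightarrow> x \<notin> Dom" for x
      by (auto simp: C_def)
    have BNQ: "BN \<inter> BQ = {}" by (auto simp: BQ_def)
    have Cv: "C (e2 v) = C (e1 v)" if v: "v \<in> V" for v
    proof (cases "blk (e1 v) \<in> BN")
      case True
      then show ?thesis using PN1[OF v True] by simp
    next
      case F1: False
      show ?thesis
      proof (cases "blk (e2 v) \<in> BN")
        case True
        then show ?thesis using PN2[OF v True] by simp
      next
        case F2: False
        show ?thesis
        proof (cases "blk (e1 v) \<in> BQ")
          case True
          then show ?thesis using Q1[OF v True] F1 F2 D1 by (simp add: C_def)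
        next
          case F3: False
          then have "blk (e2 v) \<notin> BQ" using Q2[OF v] by auto
          then show ?thesis using F1 F2 F3 D1 by (simp add: C_def)
        qed
      qed
    qed
    define A where "A = e1 ` V"
    define f where "f = e2 \<circ> inv_into V e1"
    have fe: "f (e1 v) = e2 v" if v: "v \<in> V" for v
    proof -
      have "inv_into V e1 (e1 v) \<in> V" "e1 (inv_into V e1 (e1 v)) = e1 v"
        using v by (auto intro: inv_into_into f_inv_into_f)
      then show ?thesis using eqp v by (simp add: f_def)
    qed
    have finA: "finite A" using finV by (simp add: A_def)
    have finj: "inj_on f A"
    proof (rule inj_onI)
      fix x y assume "x \<in> A" "y \<in> A" "f x = f y"
      then obtain u v where "u \<in> V" "v \<in> V" "x = e1 u" "y = e1 v" "f (e1 u) = f (e1 v)"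
        by (auto simp: A_def)
      then show "x = y" using fe eqp by metis
    qed
    have fC: "C (f a) = C a" if "a \<in> A" for a
      using that fe Cv by (auto simp: A_def)
    have fBQ: "f a \<in> set (ds b)" if "a \<in> A" "a \<in> set (ds b)" "b \<in> BQ" for a b
    proof -
      have "C a = (1, b)" using that Bs2 ds_Dom[of b] mem_ds[of a b]
        by (auto simp: C_def BQ_def BN_def)
      then have "C (f a) = (1, b)" using fC that(1) by simp
      then show ?thesis using C1 Dom_ds by blast
    qed
    have evb: "\<exists>\<pi>. \<pi> permutes set (ds b) \<and> evenperm \<pi> \<and> (\<forall>a\<in>A \<inter> set (ds b). \<pi> a = f a)"
      if bR: "b \<in> BR" for b
    proof -
      have bQ: "b \<in> BQ" using bR by (simp add: BR_def)
      have k: "bsz b = b div 2" by (simp add: bsz_def)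
      have bk: "2 * (b div 2) = b" using BQprop[OF bQ] by simp
      have rk: "(4 * (b div 2), b div 2) \<in> rsyms L" using bR by (simp add: BR_def)
      show ?thesis
      proof (rule even_ext)
        show "finite (A \<inter> set (ds b))" using finA by simp
        show "inj_on f (A \<inter> set (ds b))" using finj by (rule inj_on_subset) auto
        show "A \<inter> set (ds b) \<subseteq> set (ds b)" by simp
        show "f ` (A \<inter> set (ds b)) \<subseteq> set (ds b)" using fBQ bQ by auto
        show "card (A \<inter> set (ds b)) < bsz b \<or>
          (\<forall>\<pi>. \<pi> permutes set (ds b) \<longrightarrow> (\<forall>a\<in>A \<inter> set (ds b). \<pi> a = f a) \<longrightarrow> evenperm \<pi>)"
        proof (cases "card (A \<inter> set (ds b)) < bsz b")
          case True
          then show ?thesis by simp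
        next
          case False
          then have "bsz b \<le> card (A \<inter> set (ds b))" by simp
          then obtain B where B: "B \<subseteq> A \<inter> set (ds b)" "card B = bsz b"
            by (rule obtain_subset_with_card_n)
          have finB: "finite B" using B(1) finA finite_subset by blast
          define xs where "xs = sorted_list_of_set B"
          have xs: "set xs = B" "distinct xs" "length xs = bsz b"
            using finB B(2) by (auto simp: xs_def)
          define vs where "vs = map (inv_into V e1) xs"
          have vsV: "set vs \<subseteq> V" using xs(1) B(1)
            by (auto simp: vs_def A_def intro: inv_into_into)
          have e1vs: "map e1 vs = xs"
          proof -
            have "e1 (inv_into V e1 x) = x" if "x \<in> set xs" for x
              using that xs(1) B(1) by (auto simp: A_def intro: f_inv_into_f)
            then show ?thesis by (simp add: vs_def map_idI)
          qed
          have e2vs: "map e2 vs = map f xs" by (simp add: vs_def f_def)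
          have lvs: "length vs = b div 2" using xs(3) k by (simp add: vs_def)
          have "FRel (4 * (b div 2)) (map Var vs) \<in> RF" unfolding RF_def
            by (rule image_eqI[where x="(b, vs)"]) (use bR vsV lvs in auto)
          then have "FRel (4 * (b div 2)) (map Var vs) \<in> F" by (simp add: F_def)
          then have "sat MM e1 (FRel (4 * (b div 2)) (map Var vs)) = sat MM e2 (FRel (4 * (b div 2)) (map Var vs))"
            using ag by blast
          then have "relM (4 * (b div 2)) (map e1 vs) = relM (4 * (b div 2)) (map e2 vs)"
            by (simp only: sat_rel_var MM_simps)
          then have "RB b (map e1 vs) = RB b (map e2 vs)"
            by (simp only: relM_RD bk)
          then have RBeq: "RB b xs = RB b (map f xs)"
            by (simp only: e1vs e2vs)
          have vxs: "valid b xs" using xs B(1) by (auto simp: valid_def)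
          show ?thesis
          proof (rule disjI2, intro allI impI)
            fix \<pi> assume \<pi>: "\<pi> permutes set (ds b)" "\<forall>a\<in>A \<inter> set (ds b). \<pi> a = f a"
            have mfp: "map f xs = map \<pi> xs"
            proof (rule map_cong[OF refl])
              fix x assume "x \<in> set xs"
              then have "x \<in> A \<inter> set (ds b)" using xs(1) B(1) by blast
              then show "f x = \<pi> x" using \<pi>(2) by simp
            qed
            show "evenperm \<pi>" using RBeq RB_map[OF \<pi>(1) vxs] mfp by metis
          qed
        qed
      qed
    qed
    define \<pi>s where "\<pi>s b = (SOME \<pi>. \<pi> permutes set (ds b) \<and> evenperm \<pi> \<and> (\<forall>a\<in>A \<inter> set (ds b). \<pi> a = f a))" for b
    have \<pi>s: "\<pi>s b permutes set (ds b) \<and> evenperm (\<pi>s b) \<and> (\<forall>a\<in>A \<inter> set (ds b). \<pi>s b a = f a)"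
      if "b \<in> BR" for b
      unfolding \<pi>s_def using someI_ex[OF evb[OF that]] .
    define U where "U = (\<Union>b\<in>BR. set (ds b))"
    have Ul: "blk x \<in> BR \<and> x \<in> set (ds (blk x))" if "x \<in> U" for x
      using that by (auto simp: U_def mem_ds)
    have BRQ: "BR \<subseteq> BQ" by (auto simp: BR_def)
    have CU: "C x = (1, b)" if "x \<in> set (ds b)" "b \<in> BQ" for x b
      using that Bs2 ds_Dom[of b] mem_ds[of x b] by (auto simp: C_def BQ_def BN_def)
    have CUiff: "x \<in> U \<longleftrightarrow> (\<exists>b\<in>BR. C x = (1, b))" for x
    proof
      assume "x \<in> U"
      then show "\<exists>b\<in>BR. C x = (1, b)" using Ul CU BRQ by blast
    next
      assume "\<exists>b\<in>BR. C x = (1, b)"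
      then obtain b where "b \<in> BR" "C x = (1, b)" by blast
      then show "x \<in> U" using C1 Dom_ds by (auto simp: U_def)
    qed
    define f' where "f' x = (if x \<in> U then \<pi>s (blk x) x else f x)" for x
    define A' where "A' = A \<union> U"
    have finA': "finite A'" using finA finBR by (simp add: A'_def U_def)
    have f'in: "f' x \<in> set (ds (blk x))" "blk x \<in> BQ" "x \<in> set (ds (blk x))" if xU: "x \<in> U" for x
    proof -
      have b: "blk x \<in> BR" "x \<in> set (ds (blk x))" using Ul[OF xU] by auto
      have fx: "f' x = \<pi>s (blk x) x" using xU by (simp add: f'_def)
      have "\<pi>s (blk x) permutes set (ds (blk x))" using \<pi>s[OF b(1)] by blast
      then show "f' x \<in> set (ds (blk x))" using fx b(2) perm_mem by metis
      show "blk x \<in> BQ" using b(1) BRQ by blast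
      show "x \<in> set (ds (blk x))" using b(2) .
    qed
    have f'C: "C (f' a) = C a" if aA: "a \<in> A'" for a
    proof (cases "a \<in> U")
      case True
      have "C (f' a) = (1, blk a)" using CU[OF f'in(1)[OF True] f'in(2)[OF True]] .
      moreover have "C a = (1, blk a)" using CU[OF f'in(3)[OF True] f'in(2)[OF True]] .
      ultimately show ?thesis by simp
    next
      case False
      then have "a \<in> A" "f' a = f a" using aA by (auto simp: A'_def f'_def)
      then show ?thesis using fC by simp
    qed
    have f'U: "f' x \<in> U \<longleftrightarrow> x \<in> U" if "x \<in> A'" for x
      using CUiff[of x] CUiff[of "f' x"] f'C[OF that] by metis
    have f'inj: "inj_on f' A'"
    proof (rule inj_onI)
      fix x y assume xy: "x \<in> A'" "y \<in> A'" "f' x = f' y"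
      show "x = y"
      proof (cases "x \<in> U")
        case True
        then have yU: "y \<in> U" using f'U xy by metis
        have bx: "blk x \<in> BR" using Ul[OF True] by auto
        have "blk x = blk y" using f'in(1)[OF True] f'in(1)[OF yU] xy(3) by (simp add: mem_ds)
        then have "\<pi>s (blk x) x = \<pi>s (blk x) y" using xy(3) True yU by (simp add: f'_def)
        moreover have "inj (\<pi>s (blk x))" using \<pi>s[OF bx] permutes_inj by blast
        ultimately show ?thesis by (simp add: inj_eq)
      next
        case False
        then have yU: "y \<notin> U" using f'U xy by metis
        then have "f x = f y" using False xy(3) by (simp add: f'_def)
        moreover have "x \<in> A" "y \<in> A" using False yU xy by (auto simp: A'_def)
        ultimately show ?thesis using finj by (simp add: inj_on_def)
      qed
    qed
    obtain \<sigma> where \<sigma>: "bij \<sigma>" "\<forall>x. C (\<sigma> x) = C x" "\<forall>a\<in>A'. \<sigma> a = f' a"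
      using ext_perm[OF finA' f'inj] f'C by blast
    have \<sigma>V: "\<sigma> (e1 v) = e2 v" if v: "v \<in> V" for v
    proof -
      have inA: "e1 v \<in> A" "e1 v \<in> A'" using v by (auto simp: A_def A'_def)
      show ?thesis
      proof (cases "e1 v \<in> U")
        case True
        have b: "blk (e1 v) \<in> BR" "e1 v \<in> set (ds (blk (e1 v)))" using Ul[OF True] by auto
        have "\<pi>s (blk (e1 v)) (e1 v) = f (e1 v)" using \<pi>s[OF b(1)] b(2) inA(1) by blast
        then show ?thesis using \<sigma>(3) inA(2) True fe[OF v] by (simp add: f'_def)
      next
        case False
        then show ?thesis using \<sigma>(3) inA(2) fe[OF v] by (simp add: f'_def)
      qed
    qed
    have \<sigma>Dom: "\<sigma> x \<in> Dom \<longleftrightarrow> x \<in> Dom" for x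
      using C3[of x] C3[of "\<sigma> x"] \<sigma>(2) by metis
    have \<sigma>bij: "bij_betw \<sigma> Dom Dom"
    proof -
      have "inj_on \<sigma> Dom" using bij_is_inj[OF \<sigma>(1)] inj_on_subset by blast
      moreover have "\<sigma> ` Dom = Dom"
      proof
        show "\<sigma> ` Dom \<subseteq> Dom" using \<sigma>Dom by auto
        show "Dom \<subseteq> \<sigma> ` Dom"
        proof
          fix y assume "y \<in> Dom"
          obtain x where "y = \<sigma> x" using bij_is_surj[OF \<sigma>(1)] by (metis surjD)
          then show "y \<in> \<sigma> ` Dom" using \<sigma>Dom \<open>y \<in> Dom\<close> by auto
        qed
      qed
      ultimately show ?thesis by (simp add: bij_betw_def)
    qed
    have \<sigma>fix: "\<sigma> x = x" if "b \<in> BN" "x \<in> set (ds b)" for b x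
    proof -
      have "b \<in> Bs" using that by (simp add: BN_def)
      then have "x \<in> Dom" "blk x = b" using that Bs2 ds_Dom mem_ds by blast+
      then have "C x = (0, x)" using that by (simp add: C_def)
      then show ?thesis using \<sigma>(2) C0 by metis
    qed
    have \<sigma>mem: "\<sigma> x \<in> set (ds b) \<longleftrightarrow> x \<in> set (ds b)" if b: "b \<in> Bs" for b x
    proof (cases "b \<in> BN")
      case True
      show ?thesis
      proof
        assume "x \<in> set (ds b)"
        then show "\<sigma> x \<in> set (ds b)" using \<sigma>fix[OF True] by simp
      next
        assume a: "\<sigma> x \<in> set (ds b)"
        then have "\<sigma> (\<sigma> x) = \<sigma> x" using \<sigma>fix[OF True] by blast
        then have "\<sigma> x = x" using bij_is_inj[OF \<sigma>(1)] by (simp add: inj_eq)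
        then show "x \<in> set (ds b)" using a by simp
      qed
    next
      case False
      then have bq: "b \<in> BQ" using b by (simp add: BQ_def)
      show ?thesis
      proof
        assume "x \<in> set (ds b)"
        then have "C (\<sigma> x) = (1, b)" using CU bq \<sigma>(2) by metis
        then show "\<sigma> x \<in> set (ds b)" using C1 Dom_ds by blast
      next
        assume "\<sigma> x \<in> set (ds b)"
        then have "C x = (1, b)" using CU bq \<sigma>(2) by metis
        then show "x \<in> set (ds b)" using C1 Dom_ds by blast
      qed
    qed
    have \<sigma>R: "\<sigma> x = \<pi>s b x" if "b \<in> BR" "x \<in> set (ds b)" for b x
    proof -
      have xU: "x \<in> U" using that by (auto simp: U_def)
      have "blk x = b" using that by (simp add: mem_ds)
      then show ?thesis using \<sigma>(3) xU by (simp add: A'_def f'_def)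
    qed
    have idp: "id permutes set (ds b)" for b by (rule permutes_id)
    have eid: "evenperm id" by simp
    have pres: "preserves MM S \<sigma>"
      unfolding preserves_def
    proof (intro ballI allI impI)
      fix r xs assume rS: "r \<in> S" and xsD: "set xs \<subseteq> dom MM"
      obtain ar where rar: "(r, ar) \<in> rsyms L" using SL[OF rS] by blast
      have ar: "ar = (if r mod 4 = 1 \<or> r mod 4 = 3 then 1 else r div 4)" using goodD(2)[OF g rar] .
      have bB: "blkOf r \<in> Bs" using rS by (simp add: Bs_def)
      have memx: "\<forall>x\<in>set xs. \<sigma> x \<in> set (ds (blkOf r)) \<longleftrightarrow> x \<in> set (ds (blkOf r))"
        using \<sigma>mem[OF bB] by blast
      show "relI MM r (map \<sigma> xs) = relI MM r xs"
      proof (cases rule: mod4_cases[of r])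
        case 1
        have bb: "blkOf r = 2 * (r div 4)" using 1 by (simp add: blkOf_def)
        have "RB (blkOf r) (map \<sigma> xs) = RB (blkOf r) xs"
        proof (cases "blkOf r \<in> BN")
          case True
          show ?thesis by (rule RB_local[OF memx idp eid]) (use \<sigma>fix[OF True] in auto)
        next
          case False
          then have bq: "blkOf r \<in> BQ" using bB by (simp add: BQ_def)
          have "(4 * (blkOf r div 2), blkOf r div 2) \<in> rsyms L" using rar ar 1 bb by simp
          then have bR: "blkOf r \<in> BR" using bq by (simp add: BR_def)
          show ?thesis using \<pi>s[OF bR] \<sigma>R[OF bR] by (intro RB_local[OF memx]) auto
        qed
        then show ?thesis using 1 bb by (simp add: relM_def)
      next
        case 2
        have bb: "blkOf r = 2 * (r div 4)" using 2 by (simp add: blkOf_def)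
        show ?thesis using 2 bb memx by (auto simp: relM_def single_map)
      next
        case 3
        have bb: "blkOf r = 2 * (r div 4) + 1" using 3 by (simp add: blkOf_def)
        have "(4 * (r div 4) + 2, r div 4) \<in> rsyms L" using rar ar 3 by simp
        then have "named L (blkOf r)" using goodD(7)[OF g] bb by simp
        then have bN: "blkOf r \<in> BN" using bB by (simp add: BN_def)
        have "RB (blkOf r) (map \<sigma> xs) = RB (blkOf r) xs"
          by (rule RB_local[OF memx idp eid]) (use \<sigma>fix[OF bN] in auto)
        then show ?thesis using 3 bb by (simp add: relM_def)
      next
        case 4
        let ?a = "r div 4"
        have bb: "blkOf r = blk ?a" using 4 by (simp add: blkOf_def)
        have aD: "?a \<in> Dom" using goodD(4)[OF g rar] 4 by simp
        have aS: "?a \<in> set (ds (blk ?a))" using Dom_ds[OF aD] .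
        have "(4 * ?a + 3, 1) \<in> rsyms L" using rar ar 4 by simp
        then have "named L (blk ?a)" using goodD(5)[OF g, of "blk ?a"] aS by blast
        then have bN: "blk ?a \<in> BN" using bB bb by (simp add: BN_def)
        have "\<sigma> x = ?a \<longleftrightarrow> x = ?a" for x
        proof
          assume h: "\<sigma> x = ?a"
          then have "x \<in> set (ds (blk ?a))" using \<sigma>mem[OF bB] aS bb by metis
          then show "x = ?a" using \<sigma>fix[OF bN] h by simp
        next
          assume "x = ?a"
          then show "\<sigma> x = ?a" using \<sigma>fix[OF bN aS] by simp
        qed
        then show ?thesis using 4 by (auto simp: relM_def single_map)
      qed
    qed
    have "sat MM (\<sigma> \<circ> e1) p = sat MM e1 p"
      using sat_aut[OF goodD(1)[OF g] wp, of \<sigma> MM e1] \<sigma>bij pres r1 by (simp add: S_def)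
    moreover have "sat MM (\<sigma> \<circ> e1) p = sat MM e2 p"
      using \<sigma>V by (intro sat_coinc) (simp add: V_def)
    ultimately show "sat MM e1 p = sat MM e2 p" by simp
  qed
qed


definition mkL4 :: "nat set \<Rightarrow> nat set \<Rightarrow> nat set \<Rightarrow> nat set \<Rightarrow> lang" where
  "mkL4 KD KQ KE NA = \<lparr>fsyms = {}, rsyms = (\<lambda>k. (4 * k, k)) ` KD \<union> (\<lambda>k. (4 * k + 1, 1)) ` KQ
     \<union> (\<lambda>k. (4 * k + 2, k)) ` KE \<union> (\<lambda>a. (4 * a + 3, 1)) ` NA\<rparr>"

lemma img0: "((r::nat), (ar::nat)) \<in> (\<lambda>k. (4 * k, k)) ` K \<longleftrightarrow> (r mod 4 = 0 \<and> r div 4 \<in> K \<and> ar = r div 4)"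
proof
  assume "r mod 4 = 0 \<and> r div 4 \<in> K \<and> ar = r div 4"
  moreover from this have "r mod 4 = 0" by simp
  then have "r = 4 * (r div 4)" by presburger
  ultimately show "(r, ar) \<in> (\<lambda>k. (4 * k, k)) ` K" by (intro image_eqI[where x="r div 4"]) auto
qed auto

lemma img1: "((r::nat), (ar::nat)) \<in> (\<lambda>k. (4 * k + 1, 1)) ` K \<longleftrightarrow> (r mod 4 = 1 \<and> r div 4 \<in> K \<and> ar = 1)"
proof
  assume "r mod 4 = 1 \<and> r div 4 \<in> K \<and> ar = 1"
  moreover from this have "r mod 4 = 1" by simp
  then have "r = 4 * (r div 4) + 1" by presburger
  ultimately show "(r, ar) \<in> (\<lambda>k. (4 * k + 1, 1)) ` K" by (intro image_eqI[where x="r div 4"]) auto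
qed auto

lemma img2: "((r::nat), (ar::nat)) \<in> (\<lambda>k. (4 * k + 2, k)) ` K \<longleftrightarrow> (r mod 4 = 2 \<and> r div 4 \<in> K \<and> ar = r div 4)"
proof
  assume "r mod 4 = 2 \<and> r div 4 \<in> K \<and> ar = r div 4"
  moreover from this have "r mod 4 = 2" by simp
  then have "r = 4 * (r div 4) + 2" by presburger
  ultimately show "(r, ar) \<in> (\<lambda>k. (4 * k + 2, k)) ` K" by (intro image_eqI[where x="r div 4"]) auto
qed auto

lemma img3: "((r::nat), (ar::nat)) \<in> (\<lambda>k. (4 * k + 3, 1)) ` K \<longleftrightarrow> (r mod 4 = 3 \<and> r div 4 \<in> K \<and> ar = 1)"
proof
  assume "r mod 4 = 3 \<and> r div 4 \<in> K \<and> ar = 1"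
  moreover from this have "r mod 4 = 3" by simp
  then have "r = 4 * (r div 4) + 3" by presburger
  ultimately show "(r, ar) \<in> (\<lambda>k. (4 * k + 3, 1)) ` K" by (intro image_eqI[where x="r div 4"]) auto
qed auto

lemma rsyms_mkL4: "(r, ar) \<in> rsyms (mkL4 KD KQ KE NA) \<longleftrightarrow>
   (r mod 4 = 0 \<and> r div 4 \<in> KD \<and> ar = r div 4) \<or> (r mod 4 = 1 \<and> r div 4 \<in> KQ \<and> ar = 1) \<or>
   (r mod 4 = 2 \<and> r div 4 \<in> KE \<and> ar = r div 4) \<or> (r mod 4 = 3 \<and> r div 4 \<in> NA \<and> ar = 1)"
  unfolding mkL4_def by (simp only: lang.select_convs Un_iff img0 img1 img2 img3 disj_assoc)

lemma fsyms_mkL4[simp]: "fsyms (mkL4 KD KQ KE NA) = {}"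
  by (simp add: mkL4_def)

lemma mem_RD: "(4 * k, k) \<in> rsyms (mkL4 KD KQ KE NA) \<longleftrightarrow> k \<in> KD"
  by (simp add: rsyms_mkL4)
lemma mem_QD: "(4 * k + 1, 1) \<in> rsyms (mkL4 KD KQ KE NA) \<longleftrightarrow> k \<in> KQ"
  by (simp add: rsyms_mkL4)
lemma mem_RE: "(4 * k + 2, k) \<in> rsyms (mkL4 KD KQ KE NA) \<longleftrightarrow> k \<in> KE"
  by (simp add: rsyms_mkL4)
lemma mem_P: "(4 * a + 3, 1) \<in> rsyms (mkL4 KD KQ KE NA) \<longleftrightarrow> a \<in> NA"
  by (simp add: rsyms_mkL4)

lemma named_mkL4: "named (mkL4 KD KQ KE NA) b \<longleftrightarrow> set (ds b) \<subseteq> NA"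
  unfolding named_def by (simp only: mem_P subset_eq)

lemma goodL_mkL4:
  assumes "0 \<notin> KD" "0 \<notin> KQ" "0 \<notin> KE" "NA \<subseteq> Dom"
    "\<forall>b. set (ds b) \<subseteq> NA \<or> set (ds b) \<inter> NA = {}"
    "\<forall>k\<in>KD. set (ds (2 * k)) \<subseteq> NA \<or> (k \<in> KQ \<and> k \<le> n)"
    "\<forall>k\<in>KE. set (ds (2 * k + 1)) \<subseteq> NA"
  shows "goodL n (mkL4 KD KQ KE NA)"
  unfolding goodL_def
proof (intro conjI)
  show "fsyms (mkL4 KD KQ KE NA) = {}" by simp
  show "\<forall>(r, ar)\<in>rsyms (mkL4 KD KQ KE NA). ar = (if r mod 4 = 1 \<or> r mod 4 = 3 then 1 else r div 4)"
    by (auto simp: rsyms_mkL4)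
  show "\<forall>(r, ar)\<in>rsyms (mkL4 KD KQ KE NA). r mod 4 \<noteq> 3 \<longrightarrow> 1 \<le> r div 4"
  proof (clarify)
    fix r ar assume ra: "(r, ar) \<in> rsyms (mkL4 KD KQ KE NA)" "r mod 4 \<noteq> 3"
    then have "r div 4 \<in> KD \<union> KQ \<union> KE" by (auto simp: rsyms_mkL4)
    then have "r div 4 \<noteq> 0" using assms(1-3) by (metis UnE)
    then show "1 \<le> r div 4" by simp
  qed
  show "\<forall>(r, ar)\<in>rsyms (mkL4 KD KQ KE NA). r mod 4 = 3 \<longrightarrow> r div 4 \<in> Dom"
    using assms(4) by (auto simp: rsyms_mkL4)
  show "\<forall>b. named (mkL4 KD KQ KE NA) b \<or> (\<forall>a\<in>set (ds b). (4 * a + 3, 1) \<notin> rsyms (mkL4 KD KQ KE NA))"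
    using assms(5) unfolding named_mkL4 by (simp only: mem_P) blast
  show "\<forall>k. (4 * k, k) \<in> rsyms (mkL4 KD KQ KE NA) \<longrightarrow>
      named (mkL4 KD KQ KE NA) (2 * k) \<or> ((4 * k + 1, 1) \<in> rsyms (mkL4 KD KQ KE NA) \<and> k \<le> n)"
    using assms(6) unfolding named_mkL4 by (simp only: mem_RD mem_QD) blast
  show "\<forall>k. (4 * k + 2, k) \<in> rsyms (mkL4 KD KQ KE NA) \<longrightarrow> named (mkL4 KD KQ KE NA) (2 * k + 1)"
    using assms(7) unfolding named_mkL4 by (simp only: mem_RE) blast
qed

lemma noP_mkL4: "set (ds b) \<inter> NA = {} \<Longrightarrow>
    \<forall>(r, ar)\<in>rsyms (mkL4 KD KQ KE NA). r mod 4 = 3 \<longrightarrow> r div 4 \<notin> set (ds b)"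
  by (auto simp: rsyms_mkL4)

lemma relM_RE: "relM (4 * k + 2) = RB (2 * k + 1)"
  by (rule ext) (simp add: relM_def)

lemma two_Dom: "prod_encode (2, 0) \<in> Dom" "prod_encode (2, 1) \<in> Dom" "prod_encode (2, 0) \<noteq> prod_encode (2, 1)"
  by (simp_all add: Dom_def bsz_def)

lemma not0: "\<not> nary_theory (mkL4 KD KQ KE NA) (ThL (mkL4 KD KQ KE NA) MM) 0"
  by (rule lb0[OF struc_MM[OF fsyms_mkL4], of "prod_encode (2, 0)" "prod_encode (2, 1)"])
    (use two_Dom in auto)

lemma has_ar_fin:
  assumes g: "goodL m (mkL4 KD KQ KE NA)" and m: "m \<ge> 1" and KD: "m \<ge> 2 \<Longrightarrow> m \<in> KD"
    and NA: "set (ds (2 * m)) \<inter> NA = {}"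
  shows "has_ar (mkL4 KD KQ KE NA) (ThL (mkL4 KD KQ KE NA) MM) (enat m)"
proof -
  have ub: "nary_theory (mkL4 KD KQ KE NA) (ThL (mkL4 KD KQ KE NA) MM) m"
    by (rule ub_main[OF g m])
  have lb: "\<not> nary_theory (mkL4 KD KQ KE NA) (ThL (mkL4 KD KQ KE NA) MM) (m - 1)"
  proof (cases "m = 1")
    case True
    then show ?thesis using not0 by simp
  next
    case False
    then have m2: "m \<ge> 2" using m by simp
    have bs: "bsz (2 * m) = Suc (m - 1)" using m2 by (simp add: bsz_def)
    have rb: "(4 * m, Suc (m - 1)) \<in> rsyms (mkL4 KD KQ KE NA)" using KD[OF m2] m2 by (simp add: mem_RD)
    show ?thesis
      by (rule lb_block[OF fsyms_mkL4 bs _ _ rb relM_RD noP_mkL4[OF NA]]) (use m2 in auto)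
  qed
  show ?thesis using ub lb by (simp add: has_ar_def)
qed

lemma has_ar_inf:
  assumes KE: "\<forall>k\<ge>1. k \<in> KE" and NA: "NA = {}"
  shows "has_ar (mkL4 KD KQ KE NA) (ThL (mkL4 KD KQ KE NA) MM) \<infinity>"
  unfolding has_ar_def
proof (simp, intro allI)
  fix j
  show "\<not> nary_theory (mkL4 KD KQ KE NA) (ThL (mkL4 KD KQ KE NA) MM) j"
  proof (cases "j = 0")
    case True
    then show ?thesis using not0 by simp
  next
    case False
    then have j1: "j \<ge> 1" by simp
    have bs: "bsz (2 * Suc j + 1) = Suc j" by (simp add: bsz_def)
    have "Suc j \<in> KE" using KE by simp
    then have rb: "(4 * Suc j + 2, Suc j) \<in> rsyms (mkL4 KD KQ KE NA)" by (simp only: mem_RE)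
    show ?thesis
      by (rule lb_block[OF fsyms_mkL4 bs j1 _ rb relM_RE noP_mkL4]) (use NA in auto)
  qed
qed

lemma sublang_mkL4:
  "KD \<subseteq> KD' \<Longrightarrow> KQ \<subseteq> KQ' \<Longrightarrow> KE \<subseteq> KE' \<Longrightarrow> NA \<subseteq> NA' \<Longrightarrow>
    sublang (mkL4 KD KQ KE NA) (mkL4 KD' KQ' KE' NA')"
  by (auto simp: sublang_def mkL4_def)

lemma Th_mono: "sublang L L' \<Longrightarrow> ThL L M \<subseteq> ThL L' M"
  by (auto simp: ThL_def sentence_def intro: wf_fm_mono)

lemma expansion_mkL4:
  assumes "KD \<subseteq> KD'" "KQ \<subseteq> KQ'" "KE \<subseteq> KE'" "NA \<subseteq> NA'"
  shows "complete_theory (mkL4 KD KQ KE NA) (ThL (mkL4 KD KQ KE NA) MM) \<and>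
    expansion (mkL4 KD KQ KE NA) (ThL (mkL4 KD KQ KE NA) MM)
      (mkL4 KD' KQ' KE' NA') (ThL (mkL4 KD' KQ' KE' NA') MM)"
  using sublang_mkL4[OF assms] Th_mono complete_Th[OF struc_MM[OF fsyms_mkL4]]
  by (auto simp: expansion_def)


lemma case_le:
  assumes "1 \<le> m" "m \<le> n"
  shows "\<exists>L T L' T'. complete_theory L T \<and> expansion L T L' T' \<and>
           has_ar L T (enat m) \<and> has_ar L' T' (enat n)"
proof -
  let ?L = "mkL4 {m} {m, n} {} {}"
  let ?L' = "mkL4 {m, n} {m, n} {} {}"
  have e: "complete_theory ?L (ThL ?L MM) \<and> expansion ?L (ThL ?L MM) ?L' (ThL ?L' MM)"
    by (rule expansion_mkL4) auto
  have g1: "goodL m ?L" using assms by (intro goodL_mkL4) auto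
  have h1: "has_ar ?L (ThL ?L MM) (enat m)" by (rule has_ar_fin[OF g1 assms(1)]) auto
  have g2: "goodL n ?L'" using assms by (intro goodL_mkL4) auto
  have h2: "has_ar ?L' (ThL ?L' MM) (enat n)" by (rule has_ar_fin[OF g2]) (use assms in auto)
  show ?thesis using e h1 h2 by blast
qed

lemma case_gt:
  assumes "1 \<le> n" "n < m"
  shows "\<exists>L T L' T'. complete_theory L T \<and> expansion L T L' T' \<and>
           has_ar L T (enat m) \<and> has_ar L' T' (enat n)"
proof -
  let ?N = "set (ds (2 * m))"
  let ?L = "mkL4 {m} {m, n} {} {}"
  let ?L' = "mkL4 {m, n} {m, n} {} ?N"
  have e: "complete_theory ?L (ThL ?L MM) \<and> expansion ?L (ThL ?L MM) ?L' (ThL ?L' MM)"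
    by (rule expansion_mkL4) auto
  have m1: "1 \<le> m" using assms by simp
  have g1: "goodL m ?L" using assms by (intro goodL_mkL4) auto
  have h1: "has_ar ?L (ThL ?L MM) (enat m)" by (rule has_ar_fin[OF g1 m1]) auto
  have ND: "?N \<subseteq> Dom" using ds_Dom[of "2 * m"] m1 by simp
  have aon: "\<forall>b. set (ds b) \<subseteq> ?N \<or> set (ds b) \<inter> ?N = {}"
  proof
    fix b show "set (ds b) \<subseteq> ?N \<or> set (ds b) \<inter> ?N = {}"
    proof (cases "b = 2 * m")
      case True
      then show ?thesis by simp
    next
      case False
      then show ?thesis using ds_disj[OF False] by simp
    qed
  qed
  have dn: "set (ds (2 * n)) \<inter> ?N = {}" using ds_disj[of "2 * n" "2 * m"] assms by simp
  have g2: "goodL n ?L'"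
  proof (rule goodL_mkL4)
    show "0 \<notin> {m, n}" using assms by simp
    show "0 \<notin> {m, n}" using assms by simp
    show "0 \<notin> {}" by simp
    show "?N \<subseteq> Dom" by (rule ND)
    show "\<forall>b. set (ds b) \<subseteq> ?N \<or> set (ds b) \<inter> ?N = {}" by (rule aon)
    show "\<forall>k\<in>{m, n}. set (ds (2 * k)) \<subseteq> ?N \<or> k \<in> {m, n} \<and> k \<le> n" by simp
    show "\<forall>k\<in>{}. set (ds (2 * k + 1)) \<subseteq> ?N" by simp
  qed
  have h2: "has_ar ?L' (ThL ?L' MM) (enat n)" by (rule has_ar_fin[OF g2 assms(1) _ dn]) auto
  show ?thesis using e h1 h2 by blast
qed

lemma case_fi:
  assumes "1 \<le> m"
  shows "\<exists>L T L' T'. complete_theory L T \<and> expansion L T L' T' \<and>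
           has_ar L T (enat m) \<and> has_ar L' T' \<infinity>"
proof -
  let ?L = "mkL4 {m} {m} {} {}"
  let ?L' = "mkL4 {m} {m} {k. 1 \<le> k} {}"
  have e: "complete_theory ?L (ThL ?L MM) \<and> expansion ?L (ThL ?L MM) ?L' (ThL ?L' MM)"
    by (rule expansion_mkL4) auto
  have g1: "goodL m ?L" using assms by (intro goodL_mkL4) auto
  have h1: "has_ar ?L (ThL ?L MM) (enat m)" by (rule has_ar_fin[OF g1 assms(1)]) auto
  have h2: "has_ar ?L' (ThL ?L' MM) \<infinity>" by (rule has_ar_inf) auto
  show ?thesis using e h1 h2 by blast
qed

lemma case_ii:
  shows "\<exists>L T L' T'. complete_theory L T \<and> expansion L T L' T' \<and>
           has_ar L T \<infinity> \<and> has_ar L' T' \<infinity>"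
proof -
  let ?L = "mkL4 {} {} {k. 1 \<le> k} {}"
  have e: "complete_theory ?L (ThL ?L MM) \<and> expansion ?L (ThL ?L MM) ?L (ThL ?L MM)"
    by (rule expansion_mkL4) auto
  have h: "has_ar ?L (ThL ?L MM) \<infinity>" by (rule has_ar_inf) auto
  show ?thesis using e h by blast
qed

lemma case_if:
  assumes "1 \<le> n"
  shows "\<exists>L T L' T'. complete_theory L T \<and> expansion L T L' T' \<and>
           has_ar L T \<infinity> \<and> has_ar L' T' (enat n)"
proof -
  let ?N = "{a \<in> Dom. odd (blk a)}"
  let ?L = "mkL4 {} {n} {k. 1 \<le> k} {}"
  let ?L' = "mkL4 {n} {n} {k. 1 \<le> k} ?N"
  have e: "complete_theory ?L (ThL ?L MM) \<and> expansion ?L (ThL ?L MM) ?L' (ThL ?L' MM)"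
    by (rule expansion_mkL4) auto
  have h1: "has_ar ?L (ThL ?L MM) \<infinity>" by (rule has_ar_inf) auto
  have aon: "set (ds b) \<subseteq> ?N \<or> set (ds b) \<inter> ?N = {}" for b
  proof (cases "odd b \<and> 2 \<le> b")
    case True
    then have "set (ds b) \<subseteq> ?N" using ds_Dom[of b] by (auto simp: mem_ds)
    then show ?thesis by blast
  next
    case False
    have "set (ds b) \<inter> ?N = {}"
    proof (rule ccontr)
      assume "set (ds b) \<inter> ?N \<noteq> {}"
      then obtain a where "a \<in> set (ds b)" "a \<in> Dom" "odd (blk a)" by blast
      then have "blk a = b" "2 \<le> blk a" by (auto simp: mem_ds Dom_def)
      then show False using False \<open>odd (blk a)\<close> by simp
    qed
    then show ?thesis by blast
  qed
  have KE: "\<forall>k\<in>{k. 1 \<le> k}. set (ds (2 * k + 1)) \<subseteq> ?N"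
  proof
    fix k assume "k \<in> {k. 1 \<le> (k::nat)}"
    then have "2 \<le> 2 * k + 1" by simp
    then show "set (ds (2 * k + 1)) \<subseteq> ?N" using ds_Dom[of "2 * k + 1"] by (auto simp: mem_ds)
  qed
  have g2: "goodL n ?L'"
    using assms aon KE by (intro goodL_mkL4) auto
  have dn: "set (ds (2 * n)) \<inter> ?N = {}" by (auto simp: mem_ds)
  have h2: "has_ar ?L' (ThL ?L' MM) (enat n)" by (rule has_ar_fin[OF g2 assms(1) _ dn]) auto
  show ?thesis using e h1 h2 by blast
qed

theorem theorem3p10:
  fixes \<mu> \<nu> :: enat
  assumes "\<mu> \<noteq> 0" and "\<nu> \<noteq> 0"
  shows "\<exists>L T L' T'. complete_theory L T \<and> expansion L T L' T' \<and>
           has_ar L T \<mu> \<and> has_ar L' T' \<nu>"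
proof (cases \<mu>)
  case (enat m)
  then have m: "1 \<le> m" using assms(1) by (auto simp: zero_enat_def)
  show ?thesis
  proof (cases \<nu>)
    case (enat n)
    then have n: "1 \<le> n" using assms(2) by (auto simp: zero_enat_def)
    show ?thesis
    proof (cases "m \<le> n")
      case True
      then show ?thesis using case_le[OF m True] \<open>\<mu> = enat m\<close> \<open>\<nu> = enat n\<close> by simp
    next
      case False
      then show ?thesis using case_gt[OF n] \<open>\<mu> = enat m\<close> \<open>\<nu> = enat n\<close> by simp
    qed
  next
    case infinity
    then show ?thesis using case_fi[OF m] \<open>\<mu> = enat m\<close> by simp
  qed
next
  case infinity
  show ?thesis
  proof (cases \<nu>)
    case (enat n)
    then have n: "1 \<le> n" using assms(2) by (auto simp: zero_enat_def)
    then show ?thesis using case_if[OF n] \<open>\<mu> = \<infinity>\<close> \<open>\<nu> = enat n\<close> by simp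
  next
    case infinity
    then show ?thesis using case_ii \<open>\<mu> = \<infinity>\<close> by simp
  qed
qed

end
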